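(* Let $n\in\mathbb{N}$ and let $u$, $F_n$, $G_{n-1}$, $H_n$ be as follows: $u$ is a smooth complex-valued function on $\mathbb{R}$; $F_n(z,x)=\sum_{j=0}^n f_{n-j}(x)z^j$, $H_n(z,x)=\sum_{j=0}^n h_{n-j}(x)z^j$ with $f_0=h_0=1$, $G_{n-1}(z,x)=\sum_{j=0}^{n-1}g_{n-1-j}(x)z^j$, with smooth coefficients, satisfying for all $z$, $x$: $F_{n,x}=-iu_xF_n-2izG_{n-1}$, $H_{n,x}=iu_xH_n+2izG_{n-1}$, $G_{n-1,x}=i(H_n-F_n)$, and $z^2G_{n-1}^2+zF_nH_n=R_{2n+1}(z)=\prod_{m=0}^{2n}(z-E_m)$ independent of $x$, where $E_0=0$ and $E_0,\dots,E_{2n}$ are pairwise distinct. Let $\mathcal{K}_n$ be the (nonsingular) curve $y^2=R_{2n+1}(z)$ compactified by $P_\infty$. Write $F_n(z,x)=\prod_{j=1}^n(z-\mu_j(x))$, $H_n(z,x)=\prod_{j=1}^n(z-\nu_j(x))$ and set $\hat\mu_j(x)=(\mu_j(x),-\mu_j(x)G_{n-1}(\mu_j(x),x))\in\mathcal{K}_n$, $\hat\nu_j(x)=(\nu_j(x),\nu_j(x)G_{n-1}(\nu_j(x),x))\in\mathcal{K}_n$. Suppose the zeros $\mu_1(x),\dots,\mu_n(x)$ are pairwise distinct for $x\in\Omega$, where $\Omega\subseteq\mathbb{R}$ is an open interval. Then $$\mu_{j,x}(x)=-2i\frac{y(\hat\mu_j(x))}{\prod_{\ell=1,\ell\neq j}^n(\mu_j(x)-\mu_\ell(x))},\qquad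 j=1,\dots,n,\ x\in\Omega,$$ and for any fixed $x_0\in\Omega$ and initial conditions $\hat\mu_j(x_0)\in\mathcal{K}_n$, $j=1,\dots,n$, this initial value problem has a unique solution $\{\hat\mu_j(x)\}_{j=1}^n$ with $\hat\mu_j\in C^\infty(\Omega,\mathcal{K}_n)$. The identical statements hold with $\mu$ replaced by $\nu$ (assuming the $\nu_j(x)$ pairwise distinct on $\Omega$); in particular $\nu_{j,x}(x)=-2i\,y(\hat\nu_j(x))/\prod_{\ell=1,\ell\neq j}^n(\nu_j(x)-\nu_\ell(x))$.
   Context: $y(P)$ denotes the meromorphic function on $\mathcal{K}_n$ with $y^2=R_{2n+1}(z)$; points of $\mathcal{K}_n\setminus\{P_\infty\}$ are written $P=(z,y)$. *)

theory Defs
  imports "HOL-Analysis.Analysis"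
begin

definition vderiv :: "(real \<Rightarrow> complex) \<Rightarrow> real \<Rightarrow> complex" where
  "vderiv f = (\<lambda>x. vector_derivative f (at x))"

definition smooth_on :: "real set \<Rightarrow> (real \<Rightarrow> complex) \<Rightarrow> bool" where
  "smooth_on S f \<longleftrightarrow> (\<forall>k. \<forall>x\<in>S. ((vderiv ^^ k) f) differentiable (at x))"

definition Fpoly :: "nat \<Rightarrow> (nat \<Rightarrow> real \<Rightarrow> complex) \<Rightarrow> complex \<Rightarrow> real \<Rightarrow> complex" where
  "Fpoly n f z x = (\<Sum>j\<le>n. f (n - j) x * z ^ j)"

definition Gpoly :: "nat \<Rightarrow> (nat \<Rightarrow> real \<Rightarrow> complex) \<Rightarrow> complex \<Rightarrow> real \<Rightarrow> complex" where
  "Gpoly n g z x = (\<Sum>j<n. g (n - 1 - j) x * z ^ j)"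

definition Rfun :: "nat \<Rightarrow> (nat \<Rightarrow> complex) \<Rightarrow> complex \<Rightarrow> complex" where
  "Rfun n E z = (\<Prod>m\<le>2*n. z - E m)"

datatype curve_point = Pinf | Aff complex complex

definition Kn :: "nat \<Rightarrow> (nat \<Rightarrow> complex) \<Rightarrow> curve_point set" where
  "Kn n E = {Pinf} \<union> {Aff z y | z y. y\<^sup>2 = Rfun n E z}"

fun ycoord :: "curve_point \<Rightarrow> complex" where
  "ycoord (Aff z y) = y"
| "ycoord Pinf = 0"  (* pole; value irrelevant *)

text \<open>The ODE mu_{j,x} = -2i y(hat mu_j)/prod(...) is read
  as the vector field on the (nonsingular, embedded) curve K_n, whose y-component is
  y_{j,x} = -i R'(z_j)/prod(...) (tangency to y^2 = R(z)).\<close>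

definition dubrovin_sol ::
  "nat \<Rightarrow> (nat \<Rightarrow> complex) \<Rightarrow> real set \<Rightarrow> (nat \<Rightarrow> real \<Rightarrow> complex) \<Rightarrow> (nat \<Rightarrow> real \<Rightarrow> complex) \<Rightarrow> bool"
  where
  "dubrovin_sol n E Om z w \<longleftrightarrow>
     (\<forall>j\<in>{1..n}. smooth_on Om (z j) \<and> smooth_on Om (w j)) \<and>
     (\<forall>j\<in>{1..n}. \<forall>x\<in>Om. Aff (z j x) (w j x) \<in> Kn n E) \<and>
     (\<forall>x\<in>Om. \<forall>j\<in>{1..n}. \<forall>l\<in>{1..n}. j \<noteq> l \<longrightarrow> z j x \<noteq> z l x) \<and>
     (\<forall>j\<in>{1..n}. \<forall>x\<in>Om.
        (z j has_vector_derivative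
           (-2 * \<i> * ycoord (Aff (z j x) (w j x)) / (\<Prod>l\<in>{1..n} - {j}. z j x - z l x))) (at x) \<and>
        (w j has_vector_derivative
           (- \<i> * deriv (Rfun n E) (z j x) / (\<Prod>l\<in>{1..n} - {j}. z j x - z l x))) (at x))"

definition dubrovin_result ::
  "nat \<Rightarrow> (nat \<Rightarrow> complex) \<Rightarrow> real set \<Rightarrow> (nat \<Rightarrow> real \<Rightarrow> complex) \<Rightarrow> (nat \<Rightarrow> real \<Rightarrow> complex) \<Rightarrow> bool"
  where
  "dubrovin_result n E Om zeta w \<longleftrightarrow>
     dubrovin_sol n E Om zeta w \<and>
     (\<forall>x0\<in>Om. \<forall>z' w'. dubrovin_sol n E Om z' w' \<and>
        (\<forall>j\<in>{1..n}. z' j x0 = zeta j x0 \<and> w' j x0 = w j x0) \<longrightarrow>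
        (\<forall>j\<in>{1..n}. \<forall>x\<in>Om. z' j x = zeta j x \<and> w' j x = w j x))"

end

theory Submission
  imports Defs "HOL-Complex_Analysis.Complex_Analysis"
begin


definition Ck :: "real set \<Rightarrow> nat \<Rightarrow> (real \<Rightarrow> complex) \<Rightarrow> bool" where
  "Ck S k \<phi> \<longleftrightarrow> (\<forall>m\<le>k. \<forall>x\<in>S. ((vderiv ^^ m) \<phi>) differentiable (at x))"

lemma smooth_on_Ck: "smooth_on S \<phi> \<longleftrightarrow> (\<forall>k. Ck S k \<phi>)"
  unfolding smooth_on_def Ck_def by blast

lemma diff_transform_open:
  fixes \<phi> :: "real \<Rightarrow> complex"
  assumes "\<phi> differentiable (at x)" "open S" "x \<in> S" "\<forall>y\<in>S. \<phi> y = \<psi> y"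
  shows "\<psi> differentiable (at x)"
  using assms has_vector_derivative_transform_within_open differentiableI_vector
  by (metis vector_derivative_works)

lemma Ck_0: "Ck S 0 \<phi> \<longleftrightarrow> (\<forall>x\<in>S. \<phi> differentiable (at x))"
  unfolding Ck_def by simp

lemma Ck_Suc: "Ck S (Suc k) \<phi> \<longleftrightarrow> (\<forall>x\<in>S. \<phi> differentiable (at x)) \<and> Ck S k (vderiv \<phi>)"
proof -
  have *: "(vderiv ^^ Suc m) \<phi> = (vderiv ^^ m) (vderiv \<phi>)" for m
    by (simp add: funpow_Suc_right del: funpow.simps)
  show ?thesis
    unfolding Ck_def
    apply (rule iffI)
    subgoal by (metis (no_types, lifting) "*" Suc_le_mono funpow_0 le0)
    subgoal by (metis "*" Suc_le_mono funpow_0 not0_implies_Suc)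
    done
qed

lemma Ck_mono: "Ck S (Suc k) \<phi> \<Longrightarrow> Ck S k \<phi>"
  unfolding Ck_def by auto

lemma Ck_diff: "Ck S k \<phi> \<Longrightarrow> x \<in> S \<Longrightarrow> (\<phi> has_vector_derivative vderiv \<phi> x) (at x)"
  unfolding Ck_def vderiv_def
  by (metis funpow_0 le0 vector_derivative_works)

lemma Ck_cong:
  assumes "open S" "\<forall>x\<in>S. \<phi> x = \<psi> x" "Ck S k \<phi>"
  shows "Ck S k \<psi>"
  using assms
proof (induction k arbitrary: \<phi> \<psi>)
  case 0
  then show ?case unfolding Ck_0
    by (metis diff_transform_open)
next
  case (Suc k)
  have d: "\<forall>x\<in>S. \<psi> differentiable (at x)"
    using Suc.prems unfolding Ck_Suc by (metis diff_transform_open)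
  have "\<forall>x\<in>S. vderiv \<phi> x = vderiv \<psi> x"
  proof
    fix x assume x: "x \<in> S"
    have "(\<phi> has_vector_derivative vderiv \<phi> x) (at x)" using Ck_diff[OF Suc.prems(3) x] .
    then have "(\<psi> has_vector_derivative vderiv \<phi> x) (at x)"
      using has_vector_derivative_transform_within_open[OF _ \<open>open S\<close> x] Suc.prems(2) by blast
    then show "vderiv \<phi> x = vderiv \<psi> x" unfolding vderiv_def by (simp add: vector_derivative_at)
  qed
  then show ?case using Suc d unfolding Ck_Suc by blast
qed

lemma Ck_deriv:
  assumes "open S" "\<forall>x\<in>S. (\<phi> has_vector_derivative \<phi>' x) (at x)" "Ck S k \<phi>'"
  shows "Ck S (Suc k) \<phi>"
proof -
  have "\<forall>x\<in>S. \<phi>' x = vderiv \<phi> x"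
    using assms(2) unfolding vderiv_def by (simp add: vector_derivative_at[symmetric])
  then have "Ck S k (vderiv \<phi>)" using Ck_cong assms by blast
  moreover have "\<forall>x\<in>S. \<phi> differentiable (at x)" using assms(2) differentiableI_vector by blast
  ultimately show ?thesis unfolding Ck_Suc by blast
qed

lemma Ck_const: "Ck S k (\<lambda>x. c)"
  unfolding Ck_def
proof (intro allI impI ballI)
  fix m x assume "m \<le> k"
  have "(vderiv ^^ m) (\<lambda>x. c) = (if m = 0 then (\<lambda>x. c) else (\<lambda>x. 0))"
  proof (induction m)
    case 0 then show ?case by simp
  next
    case (Suc m)
    have "vderiv (\<lambda>x. c) = (\<lambda>x. 0)" "vderiv (\<lambda>x. 0) = (\<lambda>x. 0)"
      unfolding vderiv_def by (auto intro!: ext vector_derivative_at derivative_eq_intros)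
    then show ?case using Suc by simp
  qed
  then show "(vderiv ^^ m) (\<lambda>x. c) differentiable at x" by simp
qed

lemma Ck_add:
  assumes "open S" "Ck S k \<phi>" "Ck S k \<psi>"
  shows "Ck S k (\<lambda>x. \<phi> x + \<psi> x)"
  using assms(2,3)
proof (induction k arbitrary: \<phi> \<psi>)
  case 0 then show ?case unfolding Ck_0 by auto
next
  case (Suc k)
  show ?case
  proof (rule Ck_deriv[OF assms(1)])
    show "\<forall>x\<in>S. ((\<lambda>x. \<phi> x + \<psi> x) has_vector_derivative vderiv \<phi> x + vderiv \<psi> x) (at x)"
      using Ck_diff Suc.prems by (auto intro!: derivative_eq_intros)
    show "Ck S k (\<lambda>x. vderiv \<phi> x + vderiv \<psi> x)"
      using Suc unfolding Ck_Suc by blast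
  qed
qed

lemma Ck_mult:
  assumes "open S" "Ck S k \<phi>" "Ck S k \<psi>"
  shows "Ck S k (\<lambda>x. \<phi> x * \<psi> x)"
  using assms(2,3)
proof (induction k arbitrary: \<phi> \<psi>)
  case 0 then show ?case unfolding Ck_0 by (auto intro: differentiable_mult)
next
  case (Suc k)
  show ?case
  proof (rule Ck_deriv[OF assms(1)])
    show "\<forall>x\<in>S. ((\<lambda>x. \<phi> x * \<psi> x) has_vector_derivative (\<phi> x * vderiv \<psi> x + vderiv \<phi> x * \<psi> x)) (at x)"
      using Ck_diff Suc.prems by (auto intro!: has_vector_derivative_mult)
    have "Ck S k (\<lambda>x. \<phi> x * vderiv \<psi> x)" "Ck S k (\<lambda>x. vderiv \<phi> x * \<psi> x)"
      using Suc Ck_mono unfolding Ck_Suc by blast+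
    then show "Ck S k (\<lambda>x. \<phi> x * vderiv \<psi> x + vderiv \<phi> x * \<psi> x)"
      using Ck_add assms(1) by blast
  qed
qed

lemma chain_vd:
  assumes "h holomorphic_on U" "open U" "\<phi> x \<in> U" "(\<phi> has_vector_derivative d) (at x)"
  shows "((\<lambda>x. h (\<phi> x)) has_vector_derivative (d * deriv h (\<phi> x))) (at x)"
proof -
  have "(h has_field_derivative deriv h (\<phi> x)) (at (\<phi> x) within UNIV)"
    by (rule holomorphic_derivI[OF assms(1,2,3)])
  then have "(h has_field_derivative deriv h (\<phi> x)) (at (\<phi> x))" by simp
  from field_vector_diff_chain_at[OF assms(4) this]
  show ?thesis by (simp add: comp_def)
qed

lemma Ck_comp:
  assumes "open S" "open U" "h holomorphic_on U" "\<forall>x\<in>S. \<phi> x \<in> U" "Ck S k \<phi>"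
  shows "Ck S k (\<lambda>x. h (\<phi> x))"
  using assms(3,4,5)
proof (induction k arbitrary: h \<phi>)
  case 0
  show ?case unfolding Ck_0
  proof
    fix x assume x: "x \<in> S"
    have "((\<lambda>x. h (\<phi> x)) has_vector_derivative (vderiv \<phi> x * deriv h (\<phi> x))) (at x)"
      by (rule chain_vd[OF 0(1) assms(2)]) (use 0(2) x Ck_diff[OF 0(3) x] in auto)
    then show "(\<lambda>x. h (\<phi> x)) differentiable at x"
      by (rule differentiableI_vector)
  qed
next
  case (Suc k)
  show ?case
  proof (rule Ck_deriv[OF assms(1)])
    show "\<forall>x\<in>S. ((\<lambda>x. h (\<phi> x)) has_vector_derivative (vderiv \<phi> x * deriv h (\<phi> x))) (at x)"
    proof
      fix x assume x: "x \<in> S"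
      show "((\<lambda>x. h (\<phi> x)) has_vector_derivative (vderiv \<phi> x * deriv h (\<phi> x))) (at x)"
        by (rule chain_vd[OF Suc.prems(1) assms(2)]) (use Suc.prems(2) x Ck_diff[OF Suc.prems(3) x] in auto)
    qed
    have "deriv h holomorphic_on U" using Suc.prems(1) assms(2) by (rule holomorphic_deriv)
    then have "Ck S k (\<lambda>x. deriv h (\<phi> x))" by (rule Suc.IH[OF _ Suc.prems(2) Ck_mono[OF Suc.prems(3)]])
    moreover have "Ck S k (vderiv \<phi>)" using Suc.prems(3) unfolding Ck_Suc by blast
    ultimately show "Ck S k (\<lambda>x. vderiv \<phi> x * deriv h (\<phi> x))"
      using Ck_mult assms(1) by blast
  qed
qed

lemma Ck_inverse:
  assumes "open S" "\<forall>x\<in>S. \<phi> x \<noteq> 0" "Ck S k \<phi>"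
  shows "Ck S k (\<lambda>x. inverse (\<phi> x))"
  using Ck_comp[OF assms(1) open_delete[OF open_UNIV, of 0], of inverse \<phi> k] assms
  using holomorphic_on_inverse[OF holomorphic_on_id[of "UNIV - {0}"]] by auto

lemma Ck_divide:
  assumes "open S" "\<forall>x\<in>S. \<psi> x \<noteq> 0" "Ck S k \<phi>" "Ck S k \<psi>"
  shows "Ck S k (\<lambda>x. \<phi> x / \<psi> x)"
  using Ck_mult[OF assms(1,3) Ck_inverse[OF assms(1,2,4)]] by (simp add: divide_inverse)

lemma Ck_prod:
  assumes "open S" "finite I" "\<forall>i\<in>I. Ck S k (\<phi> i)"
  shows "Ck S k (\<lambda>x. \<Prod>i\<in>I. \<phi> i x)"
  using assms(2,3)
proof (induction I rule: finite_induct)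
  case empty then show ?case by (simp add: Ck_const)
next
  case (insert a I)
  then show ?case using Ck_mult[OF assms(1), of k "\<phi> a" "\<lambda>x. \<Prod>i\<in>I. \<phi> i x"] by simp
qed

lemma Ck_diff_fun:
  assumes "open S" "Ck S k \<phi>" "Ck S k \<psi>"
  shows "Ck S k (\<lambda>x. \<phi> x - \<psi> x)"
  using Ck_add[OF assms(1,2) Ck_mult[OF assms(1) Ck_const[of S k "-1"] assms(3)]] by simp



type_synonym st = "(nat \<Rightarrow> complex) \<times> (nat \<Rightarrow> complex)"

definition dst :: "nat \<Rightarrow> st \<Rightarrow> st \<Rightarrow> real" where
  "dst n S T = (\<Sum>j\<in>{1..n}. norm (fst S j - fst T j) + norm (snd S j - snd T j))"

lemma dst_nonneg: "0 \<le> dst n S T"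
  unfolding dst_def by (intro sum_nonneg) auto

lemma dst_self: "dst n S S = 0"
  unfolding dst_def by simp

lemma dst_fst: "j \<in> {1..n} \<Longrightarrow> norm (fst S j - fst T j) \<le> dst n S T"
  unfolding dst_def
  by (rule order_trans[OF _ member_le_sum[of j]]) auto

lemma dst_snd: "j \<in> {1..n} \<Longrightarrow> norm (snd S j - snd T j) \<le> dst n S T"
  unfolding dst_def
  by (rule order_trans[OF _ member_le_sum[of j]]) auto

definition LipAt :: "nat \<Rightarrow> (st \<Rightarrow> complex) \<Rightarrow> st \<Rightarrow> bool" where
  "LipAt n \<Psi> S0 \<longleftrightarrow> (\<exists>r>0. \<exists>L\<ge>0. \<forall>S T. dst n S S0 < r \<longrightarrow> dst n T S0 < r \<longrightarrow>
      norm (\<Psi> S - \<Psi> T) \<le> L * dst n S T)"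

lemma Lip_const: "LipAt n (\<lambda>S. c) S0"
  unfolding LipAt_def by (rule exI[of _ 1]) auto

lemma Lip_fst: "j \<in> {1..n} \<Longrightarrow> LipAt n (\<lambda>S. fst S j) S0"
  unfolding LipAt_def
proof (intro exI[of _ 1] conjI allI impI)
  fix S T assume "j \<in> {1..n}"
  then show "norm (fst S j - fst T j) \<le> 1 * dst n S T" using dst_fst[of j n S T] by simp
qed auto

lemma Lip_snd: "j \<in> {1..n} \<Longrightarrow> LipAt n (\<lambda>S. snd S j) S0"
  unfolding LipAt_def
proof (intro exI[of _ 1] conjI allI impI)
  fix S T assume "j \<in> {1..n}"
  then show "norm (snd S j - snd T j) \<le> 1 * dst n S T" using dst_snd[of j n S T] by simp
qed auto

lemma LipAtE:
  assumes "LipAt n \<Psi> S0"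
  obtains r L where "r > 0" "L \<ge> 0"
    "\<And>S T. dst n S S0 < r \<Longrightarrow> dst n T S0 < r \<Longrightarrow> norm (\<Psi> S - \<Psi> T) \<le> L * dst n S T"
  using assms unfolding LipAt_def by blast

lemma Lip_bnd:
  assumes "r > 0" "\<And>S T. dst n S S0 < r \<Longrightarrow> dst n T S0 < r \<Longrightarrow> norm (\<Psi> S - \<Psi> T) \<le> L * dst n S T"
    "dst n S S0 < r" "L \<ge> 0"
  shows "norm (\<Psi> S - \<Psi> S0) \<le> L * r" "norm (\<Psi> S) \<le> norm (\<Psi> S0) + L * r"
proof -
  have "norm (\<Psi> S - \<Psi> S0) \<le> L * dst n S S0"
    using assms(2)[of S S0] assms(1,3) dst_self[of n S0] by simp
  also have "\<dots> \<le> L * r" using assms(3,4) by (simp add: mult_left_mono)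
  finally show "norm (\<Psi> S - \<Psi> S0) \<le> L * r" .
  then show "norm (\<Psi> S) \<le> norm (\<Psi> S0) + L * r"
    using norm_triangle_sub[of "\<Psi> S" "\<Psi> S0"] by linarith
qed

lemma Lip_add:
  assumes "LipAt n \<Psi> S0" "LipAt n \<Phi> S0"
  shows "LipAt n (\<lambda>S. \<Psi> S + \<Phi> S) S0"
proof -
  obtain r1 L1 where 1: "r1 > 0" "L1 \<ge> 0"
    "\<And>S T. dst n S S0 < r1 \<Longrightarrow> dst n T S0 < r1 \<Longrightarrow> norm (\<Psi> S - \<Psi> T) \<le> L1 * dst n S T"
    using assms(1) unfolding LipAt_def by blast
  obtain r2 L2 where 2: "r2 > 0" "L2 \<ge> 0"
    "\<And>S T. dst n S S0 < r2 \<Longrightarrow> dst n T S0 < r2 \<Longrightarrow> norm (\<Phi> S - \<Phi> T) \<le> L2 * dst n S T"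
    using assms(2) unfolding LipAt_def by blast
  show ?thesis unfolding LipAt_def
  proof (rule exI[of _ "min r1 r2"], intro conjI exI[of _ "L1 + L2"] allI impI)
    fix S T assume "dst n S S0 < min r1 r2" "dst n T S0 < min r1 r2"
    then have a: "norm (\<Psi> S - \<Psi> T) \<le> L1 * dst n S T" "norm (\<Phi> S - \<Phi> T) \<le> L2 * dst n S T"
      using 1 2 by auto
    have "norm (\<Psi> S + \<Phi> S - (\<Psi> T + \<Phi> T)) \<le> norm (\<Psi> S - \<Psi> T) + norm (\<Phi> S - \<Phi> T)"
      by (metis add_diff_add norm_triangle_ineq)
    also have "\<dots> \<le> (L1 + L2) * dst n S T" using a by (simp add: distrib_right)
    finally show "norm (\<Psi> S + \<Phi> S - (\<Psi> T + \<Phi> T)) \<le> (L1 + L2) * dst n S T" .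
  qed (use 1 2 in auto)
qed

lemma Lip_mult:
  assumes "LipAt n \<Psi> S0" "LipAt n \<Phi> S0"
  shows "LipAt n (\<lambda>S. \<Psi> S * \<Phi> S) S0"
proof -
  obtain r1 L1 where 1: "r1 > 0" "L1 \<ge> 0"
    "\<And>S T. dst n S S0 < r1 \<Longrightarrow> dst n T S0 < r1 \<Longrightarrow> norm (\<Psi> S - \<Psi> T) \<le> L1 * dst n S T"
    using assms(1) unfolding LipAt_def by blast
  obtain r2 L2 where 2: "r2 > 0" "L2 \<ge> 0"
    "\<And>S T. dst n S S0 < r2 \<Longrightarrow> dst n T S0 < r2 \<Longrightarrow> norm (\<Phi> S - \<Phi> T) \<le> L2 * dst n S T"
    using assms(2) unfolding LipAt_def by blast
  define B1 where "B1 = norm (\<Psi> S0) + L1 * r1"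
  define B2 where "B2 = norm (\<Phi> S0) + L2 * r2"
  have B1: "B1 \<ge> 0" "B2 \<ge> 0" using 1 2 unfolding B1_def B2_def by auto
  show ?thesis unfolding LipAt_def
  proof (rule exI[of _ "min r1 r2"], intro conjI exI[of _ "B1 * L2 + B2 * L1"] allI impI)
    fix S T assume ST: "dst n S S0 < min r1 r2" "dst n T S0 < min r1 r2"
    then have a: "norm (\<Psi> S - \<Psi> T) \<le> L1 * dst n S T" "norm (\<Phi> S - \<Phi> T) \<le> L2 * dst n S T"
      using 1 2 by auto
    have b: "norm (\<Psi> S) \<le> B1" "norm (\<Phi> T) \<le> B2"
      unfolding B1_def B2_def using Lip_bnd(2)[OF 1(1) 1(3)] Lip_bnd(2)[OF 2(1) 2(3)] ST 1 2 by auto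
    have "\<Psi> S * \<Phi> S - \<Psi> T * \<Phi> T = \<Psi> S * (\<Phi> S - \<Phi> T) + \<Phi> T * (\<Psi> S - \<Psi> T)"
      by (simp add: algebra_simps)
    then have "norm (\<Psi> S * \<Phi> S - \<Psi> T * \<Phi> T) \<le> norm (\<Psi> S) * norm (\<Phi> S - \<Phi> T) + norm (\<Phi> T) * norm (\<Psi> S - \<Psi> T)"
      by (metis norm_mult norm_triangle_ineq)
    also have "\<dots> \<le> B1 * (L2 * dst n S T) + B2 * (L1 * dst n S T)"
      using a b B1 by (intro add_mono mult_mono) auto
    also have "\<dots> = (B1 * L2 + B2 * L1) * dst n S T" by (simp add: algebra_simps)
    finally show "norm (\<Psi> S * \<Phi> S - \<Psi> T * \<Phi> T) \<le> (B1 * L2 + B2 * L1) * dst n S T" .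
  qed (use 1 2 B1 in auto)
qed

lemma Lip_inverse:
  assumes "LipAt n \<Psi> S0" "\<Psi> S0 \<noteq> 0"
  shows "LipAt n (\<lambda>S. inverse (\<Psi> S)) S0"
proof -
  obtain r L where 1: "r > 0" "L \<ge> 0"
    "\<And>S T. dst n S S0 < r \<Longrightarrow> dst n T S0 < r \<Longrightarrow> norm (\<Psi> S - \<Psi> T) \<le> L * dst n S T"
    using assms(1) unfolding LipAt_def by blast
  define c where "c = norm (\<Psi> S0)"
  have c: "c > 0" using assms(2) c_def by auto
  define r' where "r' = min r (c / (2 * (L + 1)))"
  have r': "r' > 0" "r' \<le> r" "L * r' \<le> c / 2" using 1 c unfolding r'_def
    by (auto simp: field_simps min_def)
  have low: "norm (\<Psi> S) \<ge> c / 2" if "dst n S S0 < r'" for S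
  proof -
    have 2: "dst n S S0 < r" using that r' by auto
    have "norm (\<Psi> S - \<Psi> S0) \<le> L * dst n S S0" using 1(3)[OF 2, of S0] 1(1) dst_self[of n S0] by simp
    also have "\<dots> \<le> L * r'" using that 1(2) by (simp add: mult_left_mono)
    finally have "norm (\<Psi> S - \<Psi> S0) \<le> c / 2" using r' by linarith
    moreover have "c \<le> norm (\<Psi> S) + norm (\<Psi> S - \<Psi> S0)"
      unfolding c_def using norm_triangle_sub[of "\<Psi> S0" "\<Psi> S"] by (simp add: norm_minus_commute)
    ultimately show ?thesis by linarith
  qed
  show ?thesis unfolding LipAt_def
  proof (rule exI[of _ r'], intro conjI exI[of _ "L * 4 / c^2"] allI impI)
    fix S T assume ST: "dst n S S0 < r'" "dst n T S0 < r'"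
    have lS: "norm (\<Psi> S) \<ge> c/2" and lT: "norm (\<Psi> T) \<ge> c/2" using low ST by auto
    then have nz: "\<Psi> S \<noteq> 0" "\<Psi> T \<noteq> 0" using c by auto
    have a: "norm (\<Psi> S - \<Psi> T) \<le> L * dst n S T" using 1(3) ST r' by auto
    have "inverse (\<Psi> S) - inverse (\<Psi> T) = (\<Psi> T - \<Psi> S) / (\<Psi> S * \<Psi> T)"
      using nz by (simp add: field_simps)
    then have "norm (inverse (\<Psi> S) - inverse (\<Psi> T)) = norm (\<Psi> S - \<Psi> T) / (norm (\<Psi> S) * norm (\<Psi> T))"
      by (simp add: norm_divide norm_mult norm_minus_commute)
    also have "\<dots> \<le> (L * dst n S T) / ((c/2) * (c/2))"
      using a lS lT c 1(2) dst_nonneg[of n S T] by (intro frac_le mult_mono) auto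
    also have "\<dots> = L * 4 / c^2 * dst n S T" by (simp add: field_simps power2_eq_square)
    finally show "norm (inverse (\<Psi> S) - inverse (\<Psi> T)) \<le> L * 4 / c^2 * dst n S T" .
  qed (use r' 1 c in auto)
qed

lemma Lip_comp:
  assumes "LipAt n \<Psi> S0" "h holomorphic_on UNIV"
  shows "LipAt n (\<lambda>S. h (\<Psi> S)) S0"
proof -
  obtain r L where 1: "r > 0" "L \<ge> 0"
    "\<And>S T. dst n S S0 < r \<Longrightarrow> dst n T S0 < r \<Longrightarrow> norm (\<Psi> S - \<Psi> T) \<le> L * dst n S T"
    using assms(1) unfolding LipAt_def by blast
  define K where "K = cball (\<Psi> S0) (L * r)"
  have "compact (deriv h ` K)" unfolding K_def
    by (intro compact_continuous_image holomorphic_on_imp_continuous_on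
          holomorphic_on_subset[OF holomorphic_deriv[OF assms(2)]]) auto
  then obtain B where B: "B > 0" "\<And>z. z \<in> K \<Longrightarrow> norm (deriv h z) \<le> B"
    using compact_imp_bounded bounded_pos by (metis image_eqI)
  show ?thesis unfolding LipAt_def
  proof (rule exI[of _ r], intro conjI exI[of _ "B * L"] allI impI)
    fix S T assume ST: "dst n S S0 < r" "dst n T S0 < r"
    have inK: "\<Psi> S \<in> K" "\<Psi> T \<in> K" unfolding K_def
      using Lip_bnd(1)[OF 1(1) 1(3) _ 1(2)] ST by (auto simp: dist_norm norm_minus_commute)
    have "norm (h (\<Psi> S) - h (\<Psi> T)) \<le> B * norm (\<Psi> S - \<Psi> T)"
    proof (rule field_differentiable_bound[of K])
      show "convex K" unfolding K_def by simp
      show "(h has_field_derivative deriv h z) (at z within K)" if "z \<in> K" for z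
        using holomorphic_derivI[OF assms(2) open_UNIV] by blast
    qed (use B inK in auto)
    also have "\<dots> \<le> B * (L * dst n S T)" using 1(3) ST B by (simp add: mult_left_mono)
    finally show "norm (h (\<Psi> S) - h (\<Psi> T)) \<le> B * L * dst n S T" by simp
  qed (use 1 B in auto)
qed

lemma Lip_prod:
  assumes "finite I" "\<forall>i\<in>I. LipAt n (\<Psi> i) S0"
  shows "LipAt n (\<lambda>S. \<Prod>i\<in>I. \<Psi> i S) S0"
  using assms
proof (induction I rule: finite_induct)
  case empty then show ?case by (simp add: Lip_const)
next
  case (insert a I)
  then show ?case using Lip_mult[of n "\<Psi> a" S0 "\<lambda>S. \<Prod>i\<in>I. \<Psi> i S"] by simp
qed

lemma Lip_diff:
  assumes "LipAt n \<Psi> S0" "LipAt n \<Phi> S0"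
  shows "LipAt n (\<lambda>S. \<Psi> S - \<Phi> S) S0"
  using Lip_add[OF assms(1) Lip_mult[OF Lip_const[of n "-1"] assms(2)]] by simp

lemma Lip_divide:
  assumes "LipAt n \<Psi> S0" "LipAt n \<Phi> S0" "\<Phi> S0 \<noteq> 0"
  shows "LipAt n (\<lambda>S. \<Psi> S / \<Phi> S) S0"
  using Lip_mult[OF assms(1) Lip_inverse[OF assms(2,3)]] by (simp add: divide_inverse)



lemma dst_sym: "dst n S T = dst n T S"
  unfolding dst_def by (simp add: norm_minus_commute)

lemma Lip_finite:
  assumes "finite J" "\<forall>j\<in>J. LipAt n (\<Psi> j) S0"
  shows "\<exists>r>0. \<exists>L\<ge>0. \<forall>j\<in>J. \<forall>S T. dst n S S0 < r \<longrightarrow> dst n T S0 < r \<longrightarrow>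
           norm (\<Psi> j S - \<Psi> j T) \<le> L * dst n S T"
  using assms
proof (induction J rule: finite_induct)
  case empty then show ?case by (intro exI[of _ 1]) auto
next
  case (insert a J)
  then obtain r1 L1 where 1: "r1 > 0" "L1 \<ge> 0" "\<forall>j\<in>J. \<forall>S T. dst n S S0 < r1 \<longrightarrow> dst n T S0 < r1 \<longrightarrow>
           norm (\<Psi> j S - \<Psi> j T) \<le> L1 * dst n S T" by auto
  obtain r2 L2 where 2: "r2 > 0" "L2 \<ge> 0" "\<forall>S T. dst n S S0 < r2 \<longrightarrow> dst n T S0 < r2 \<longrightarrow>
           norm (\<Psi> a S - \<Psi> a T) \<le> L2 * dst n S T"
    using insert.prems unfolding LipAt_def by auto
  show ?case
  proof (rule exI[of _ "min r1 r2"], intro conjI exI[of _ "max L1 L2"] ballI allI impI)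
    fix j S T assume j: "j \<in> insert a J" and ST: "dst n S S0 < min r1 r2" "dst n T S0 < min r1 r2"
    have "L1 * dst n S T \<le> max L1 L2 * dst n S T" "L2 * dst n S T \<le> max L1 L2 * dst n S T"
      using dst_nonneg[of n S T] by (auto intro: mult_right_mono)
    have ST1: "dst n S S0 < r1" "dst n T S0 < r1" and ST2: "dst n S S0 < r2" "dst n T S0 < r2"
      using ST by auto
    show "norm (\<Psi> j S - \<Psi> j T) \<le> max L1 L2 * dst n S T"
    proof (cases "j = a")
      case True
      have "norm (\<Psi> a S - \<Psi> a T) \<le> L2 * dst n S T" using 2(3) ST2 by blast
      then show ?thesis using True \<open>L2 * dst n S T \<le> max L1 L2 * dst n S T\<close> by simp
    next
      case False
      then have "j \<in> J" using j by auto
      have "norm (\<Psi> j S - \<Psi> j T) \<le> L1 * dst n S T" using 1(3) ST1 \<open>j \<in> J\<close> by blast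
      then show ?thesis using \<open>L1 * dst n S T \<le> max L1 L2 * dst n S T\<close> by simp
    qed
  qed (use 1 2 in auto)
qed

lemma mvt_c:
  fixes g :: "real \<Rightarrow> complex"
  assumes "convex K" "\<forall>s\<in>K. (g has_vector_derivative g' s) (at s)" "\<forall>s\<in>K. norm (g' s) \<le> B"
    "a \<in> K" "b \<in> K"
  shows "norm (g b - g a) \<le> B * \<bar>b - a\<bar>"
proof -
  have "norm (g b - g a) \<le> B * norm (b - a)"
  proof (rule differentiable_bound[of K g "\<lambda>s h. h *\<^sub>R g' s" B b a])
    show "(g has_derivative (\<lambda>h. h *\<^sub>R g' s)) (at s within K)" if "s \<in> K" for s
      using assms(2) that unfolding has_vector_derivative_def
      by (blast intro: has_derivative_at_withinI)
    show "onorm (\<lambda>h. h *\<^sub>R g' s) \<le> B" if "s \<in> K" for s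
    proof (rule onorm_le)
      fix h :: real
      have "norm (g' s) \<le> B" using assms(3) that by blast
      then have "\<bar>h\<bar> * norm (g' s) \<le> \<bar>h\<bar> * B" by (rule mult_left_mono) simp
      then show "norm (h *\<^sub>R g' s) \<le> B * norm h" by (simp add: mult.commute)
    qed
  qed (use assms(1,4,5) in auto)
  then show ?thesis by (simp only: real_norm_def)
qed

lemma cont_of_vd:
  assumes "\<And>x. x \<in> Om \<Longrightarrow> \<exists>d. (f has_vector_derivative d) (at x)"
  shows "continuous_on Om f"
proof (rule continuous_at_imp_continuous_on, rule ballI)
  fix x assume "x \<in> Om"
  then obtain d where "(f has_vector_derivative d) (at x)" using assms by blast
  then show "isCont f x" by (rule has_vector_derivative_continuous)
qed

lemma ode_unique:
  fixes z w z' w' :: "nat \<Rightarrow> real \<Rightarrow> complex" and \<Phi>z \<Phi>w :: "nat \<Rightarrow> st \<Rightarrow> complex"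
  assumes Om: "open Om" "connected Om" "x0 \<in> Om"
    and lip: "\<forall>x\<in>Om. \<forall>j\<in>{1..n}. LipAt n (\<Phi>z j) ((\<lambda>j. z j x), (\<lambda>j. w j x)) \<and>
                                  LipAt n (\<Phi>w j) ((\<lambda>j. z j x), (\<lambda>j. w j x))"
    and sol1: "\<forall>j\<in>{1..n}. \<forall>x\<in>Om. (z j has_vector_derivative \<Phi>z j ((\<lambda>j. z j x), (\<lambda>j. w j x))) (at x) \<and>
                                  (w j has_vector_derivative \<Phi>w j ((\<lambda>j. z j x), (\<lambda>j. w j x))) (at x)"
    and sol2: "\<forall>j\<in>{1..n}. \<forall>x\<in>Om. (z' j has_vector_derivative \<Phi>z j ((\<lambda>j. z' j x), (\<lambda>j. w' j x))) (at x) \<and>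
                                  (w' j has_vector_derivative \<Phi>w j ((\<lambda>j. z' j x), (\<lambda>j. w' j x))) (at x)"
    and init: "\<forall>j\<in>{1..n}. z j x0 = z' j x0 \<and> w j x0 = w' j x0"
  shows "\<forall>j\<in>{1..n}. \<forall>x\<in>Om. z j x = z' j x \<and> w j x = w' j x"
proof -
  define S1 where "S1 = (\<lambda>x. ((\<lambda>j. z j x), (\<lambda>j. w j x)))"
  define S2 where "S2 = (\<lambda>x. ((\<lambda>j. z' j x), (\<lambda>j. w' j x)))"
  define D where "D = (\<lambda>x. dst n (S1 x) (S2 x))"
  have cont: "continuous_on Om (z j)" "continuous_on Om (w j)"
    "continuous_on Om (z' j)" "continuous_on Om (w' j)" if j: "j \<in> {1..n}" for j
  proof -
    show "continuous_on Om (z j)" by (rule cont_of_vd) (use sol1 j in blast)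
    show "continuous_on Om (w j)" by (rule cont_of_vd) (use sol1 j in blast)
    show "continuous_on Om (z' j)" by (rule cont_of_vd) (use sol2 j in blast)
    show "continuous_on Om (w' j)" by (rule cont_of_vd) (use sol2 j in blast)
  qed
  have contD: "continuous_on Om (\<lambda>x. dst n (a x, b x) (c x, d x))"
    if "\<forall>j\<in>{1..n}. continuous_on Om (\<lambda>x. a x j) \<and> continuous_on Om (\<lambda>x. b x j) \<and>
         continuous_on Om (\<lambda>x. c x j) \<and> continuous_on Om (\<lambda>x. d x j)" for a b c d
    unfolding dst_def fst_conv snd_conv
  proof (rule continuous_on_sum)
    fix j assume "j \<in> {1..n}"
    then have "continuous_on Om (\<lambda>x. a x j)" "continuous_on Om (\<lambda>x. b x j)"
         "continuous_on Om (\<lambda>x. c x j)" "continuous_on Om (\<lambda>x. d x j)" using that by auto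
    then show "continuous_on Om (\<lambda>x. norm (a x j - c x j) + norm (b x j - d x j))"
      by (intro continuous_on_add continuous_on_norm continuous_on_diff)
  qed
  have contD1: "continuous_on Om (\<lambda>x. dst n (S1 x) (S2 x))"
    unfolding S1_def S2_def by (rule contD) (use cont in auto)
  have contD1': "continuous_on Om (\<lambda>x. dst n (S1 x) S0)" for S0
  proof -
    have "continuous_on Om (\<lambda>x. dst n (S1 x) ((\<lambda>x. fst S0) x, (\<lambda>x. snd S0) x))"
      unfolding S1_def by (rule contD) (use cont in auto)
    then show ?thesis by simp
  qed
  have contD2': "continuous_on Om (\<lambda>x. dst n (S2 x) S0)" for S0
  proof -
    have "continuous_on Om (\<lambda>x. dst n (S2 x) ((\<lambda>x. fst S0) x, (\<lambda>x. snd S0) x))"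
      unfolding S2_def by (rule contD) (use cont in auto)
    then show ?thesis by simp
  qed
  have D0: "z j x = z' j x \<and> w j x = w' j x" if "D x = 0" "j \<in> {1..n}" for x j
    using dst_fst[OF that(2), of "S1 x" "S2 x"] dst_snd[OF that(2), of "S1 x" "S2 x"] that(1)
    unfolding D_def S1_def S2_def by simp
  define A where "A = {x \<in> Om. D x = 0}"
  have closedA: "closedin (top_of_set Om) A"
    unfolding A_def D_def by (rule continuous_closedin_preimage_constant[OF contD1])
  have x0A: "x0 \<in> A"
    unfolding A_def D_def dst_def S1_def S2_def using init Om(3) by simp
  have openA: "open A"
    unfolding open_dist
  proof (intro ballI)
    fix x1 assume x1A: "x1 \<in> A"
    then have x1: "x1 \<in> Om" "D x1 = 0" unfolding A_def by auto
    define S0 where "S0 = S1 x1"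
    have "\<forall>j\<in>{1..n}. LipAt n (\<Phi>z j) S0" "\<forall>j\<in>{1..n}. LipAt n (\<Phi>w j) S0"
      using lip x1 unfolding S0_def S1_def by auto
    from Lip_finite[OF _ this(1)] Lip_finite[OF _ this(2)]
    obtain r1 L1 r2 L2 where L: "r1 > 0" "L1 \<ge> 0" "r2 > 0" "L2 \<ge> 0"
      "\<forall>j\<in>{1..n}. \<forall>S T. dst n S S0 < r1 \<longrightarrow> dst n T S0 < r1 \<longrightarrow> norm (\<Phi>z j S - \<Phi>z j T) \<le> L1 * dst n S T"
      "\<forall>j\<in>{1..n}. \<forall>S T. dst n S S0 < r2 \<longrightarrow> dst n T S0 < r2 \<longrightarrow> norm (\<Phi>w j S - \<Phi>w j T) \<le> L2 * dst n S T"
      by auto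
    define r where "r = min r1 r2"
    define L where "L = L1 + L2"
    have r: "r > 0" and Lnn: "L \<ge> 0" using L unfolding r_def L_def by auto
    have Lz: "norm (\<Phi>z j S - \<Phi>z j T) \<le> L * dst n S T" and Lw: "norm (\<Phi>w j S - \<Phi>w j T) \<le> L * dst n S T"
      if "j \<in> {1..n}" "dst n S S0 < r" "dst n T S0 < r" for j S T
    proof -
      have l1: "L1 * dst n S T \<le> L * dst n S T" and l2: "L2 * dst n S T \<le> L * dst n S T"
        unfolding L_def using L(2,4) dst_nonneg[of n S T] by (auto intro: mult_right_mono)
      have r12: "dst n S S0 < r1" "dst n T S0 < r1" "dst n S S0 < r2" "dst n T S0 < r2"
        using that(2,3) unfolding r_def by auto
      have "norm (\<Phi>z j S - \<Phi>z j T) \<le> L1 * dst n S T"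
        using L(5)[rule_format, OF that(1) r12(1) r12(2)] .
      then show "norm (\<Phi>z j S - \<Phi>z j T) \<le> L * dst n S T" using l1 by linarith
      have "norm (\<Phi>w j S - \<Phi>w j T) \<le> L2 * dst n S T"
        using L(6)[rule_format, OF that(1) r12(3) r12(4)] .
      then show "norm (\<Phi>w j S - \<Phi>w j T) \<le> L * dst n S T" using l2 by linarith
    qed
    obtain e0 where e0: "e0 > 0" "ball x1 e0 \<subseteq> Om" using Om(1) x1(1) open_contains_ball by blast
    have "S1 x1 = S0" unfolding S0_def ..
    obtain d1 where d1: "d1 > 0" "\<forall>t\<in>Om. dist t x1 < d1 \<longrightarrow> dist (dst n (S1 t) S0) (dst n (S1 x1) S0) < r"
      using continuous_on_iff[THEN iffD1, OF contD1'[of S0], rule_format, OF x1(1) r] by blast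
    obtain d2 where d2: "d2 > 0" "\<forall>t\<in>Om. dist t x1 < d2 \<longrightarrow> dist (dst n (S2 t) S0) (dst n (S2 x1) S0) < r"
      using continuous_on_iff[THEN iffD1, OF contD2'[of S0], rule_format, OF x1(1) r] by blast
    have S2x1: "dst n (S2 x1) S0 = 0"
      using x1(2) unfolding D_def S0_def by (simp add: dst_sym)
    define \<eta> where "\<eta> = min (min (min d1 d2) e0 / 2) (1 / (4 * real n * L + 4))"
    have pos4: "0 < 4 * real n * L + 4"
      using Lnn by (intro add_nonneg_pos mult_nonneg_nonneg) auto
    have m: "min (min d1 d2) e0 > 0" "min (min d1 d2) e0 \<le> d1" "min (min d1 d2) e0 \<le> d2"
       "min (min d1 d2) e0 \<le> e0" using d1(1) d2(1) e0(1) by auto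
    have eta: "\<eta> > 0" "\<eta> < d1" "\<eta> < d2" "\<eta> < e0" "\<eta> \<le> 1 / (4 * real n * L + 4)"
    proof -
      have "\<eta> \<le> min (min d1 d2) e0 / 2" "\<eta> \<le> 1 / (4 * real n * L + 4)" unfolding \<eta>_def by auto
      moreover have "\<eta> > 0" unfolding \<eta>_def using m(1) pos4 by auto
      ultimately show "\<eta> > 0" "\<eta> < d1" "\<eta> < d2" "\<eta> < e0" "\<eta> \<le> 1 / (4 * real n * L + 4)"
        using m by linarith+
    qed
    define K where "K = cball x1 \<eta>"
    have KOm: "K \<subseteq> Om" using e0 eta unfolding K_def by auto
    have inr: "dst n (S1 t) S0 < r" "dst n (S2 t) S0 < r" if "t \<in> K" for t
    proof -
      have "t \<in> Om" "dist t x1 < d1" "dist t x1 < d2" using that KOm eta unfolding K_def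
        by (auto simp: dist_commute)
      then show "dst n (S1 t) S0 < r" "dst n (S2 t) S0 < r"
        using d1 d2 S2x1 dst_nonneg dst_self unfolding S0_def by (auto simp: dist_real_def)
    qed
    have "compact K" "K \<noteq> {}" unfolding K_def using eta by auto
    moreover have "continuous_on K D" unfolding D_def using contD1 KOm continuous_on_subset by blast
    ultimately obtain ts where ts: "ts \<in> K" "\<forall>t\<in>K. D t \<le> D ts"
      using continuous_attains_sup by blast
    define M where "M = D ts"
    have M0: "M \<ge> 0" unfolding M_def D_def by (rule dst_nonneg)
    have x1K: "x1 \<in> K" unfolding K_def using eta by auto
    have comp: "norm (z j t - z' j t) \<le> L * M * \<eta> \<and> norm (w j t - w' j t) \<le> L * M * \<eta>"
      if t: "t \<in> K" and j: "j \<in> {1..n}" for t j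
    proof -
      have e1: "z j x1 - z' j x1 = 0" "w j x1 - w' j x1 = 0" using D0[OF x1(2) j] by auto
      have tx: "\<bar>t - x1\<bar> \<le> \<eta>" using t unfolding K_def by (simp add: dist_real_def abs_minus_commute)
      have LM: "L * M * \<bar>t - x1\<bar> \<le> L * M * \<eta>" using tx Lnn M0 by (simp add: mult_left_mono)
      have "norm ((z j t - z' j t) - (z j x1 - z' j x1)) \<le> (L * M) * \<bar>t - x1\<bar>"
      proof (rule mvt_c[of K _ "\<lambda>s. \<Phi>z j (S1 s) - \<Phi>z j (S2 s)"])
        show "\<forall>s\<in>K. ((\<lambda>s. z j s - z' j s) has_vector_derivative \<Phi>z j (S1 s) - \<Phi>z j (S2 s)) (at s)"
        proof
          fix s assume "s \<in> K"
          then have sO: "s \<in> Om" using KOm by blast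
          have a1: "(z j has_vector_derivative \<Phi>z j (S1 s)) (at s)" using sol1 j sO unfolding S1_def by blast
          have a2: "(z' j has_vector_derivative \<Phi>z j (S2 s)) (at s)" using sol2 j sO unfolding S2_def by blast
          show "((\<lambda>s. z j s - z' j s) has_vector_derivative \<Phi>z j (S1 s) - \<Phi>z j (S2 s)) (at s)"
            by (rule has_vector_derivative_diff[OF a1 a2])
        qed
        show "\<forall>s\<in>K. norm (\<Phi>z j (S1 s) - \<Phi>z j (S2 s)) \<le> L * M"
        proof
          fix s assume s: "s \<in> K"
          have "norm (\<Phi>z j (S1 s) - \<Phi>z j (S2 s)) \<le> L * D s"
            unfolding D_def using Lz[OF j inr[OF s]] .
          also have "\<dots> \<le> L * M" unfolding M_def using ts s Lnn by (simp add: mult_left_mono)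
          finally show "norm (\<Phi>z j (S1 s) - \<Phi>z j (S2 s)) \<le> L * M" .
        qed
      qed (use t x1K in \<open>auto simp: K_def\<close>)
      moreover have "norm ((w j t - w' j t) - (w j x1 - w' j x1)) \<le> (L * M) * \<bar>t - x1\<bar>"
      proof (rule mvt_c[of K _ "\<lambda>s. \<Phi>w j (S1 s) - \<Phi>w j (S2 s)"])
        show "\<forall>s\<in>K. ((\<lambda>s. w j s - w' j s) has_vector_derivative \<Phi>w j (S1 s) - \<Phi>w j (S2 s)) (at s)"
        proof
          fix s assume "s \<in> K"
          then have sO: "s \<in> Om" using KOm by blast
          have a1: "(w j has_vector_derivative \<Phi>w j (S1 s)) (at s)" using sol1 j sO unfolding S1_def by blast
          have a2: "(w' j has_vector_derivative \<Phi>w j (S2 s)) (at s)" using sol2 j sO unfolding S2_def by blast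
          show "((\<lambda>s. w j s - w' j s) has_vector_derivative \<Phi>w j (S1 s) - \<Phi>w j (S2 s)) (at s)"
            by (rule has_vector_derivative_diff[OF a1 a2])
        qed
        show "\<forall>s\<in>K. norm (\<Phi>w j (S1 s) - \<Phi>w j (S2 s)) \<le> L * M"
        proof
          fix s assume s: "s \<in> K"
          have "norm (\<Phi>w j (S1 s) - \<Phi>w j (S2 s)) \<le> L * D s"
            unfolding D_def using Lw[OF j inr[OF s]] .
          also have "\<dots> \<le> L * M" unfolding M_def using ts s Lnn by (simp add: mult_left_mono)
          finally show "norm (\<Phi>w j (S1 s) - \<Phi>w j (S2 s)) \<le> L * M" .
        qed
      qed (use t x1K in \<open>auto simp: K_def\<close>)
      ultimately show ?thesis using e1 LM by auto
    qed
    have Dle: "D t \<le> 2 * real n * L * M * \<eta>" if t: "t \<in> K" for t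
    proof -
      have "D t = (\<Sum>j\<in>{1..n}. norm (z j t - z' j t) + norm (w j t - w' j t))"
        unfolding D_def dst_def S1_def S2_def by simp
      also have "\<dots> \<le> (\<Sum>j\<in>{1..n}. 2 * (L * M * \<eta>))"
      proof (rule sum_mono)
        fix i assume "i \<in> {1..n}"
        then have "norm (z i t - z' i t) \<le> L * M * \<eta> \<and> norm (w i t - w' i t) \<le> L * M * \<eta>"
          by (rule comp[OF t])
        then show "norm (z i t - z' i t) + norm (w i t - w' i t) \<le> 2 * (L * M * \<eta>)" by linarith
      qed
      also have "\<dots> = 2 * real n * L * M * \<eta>" by simp
      finally show ?thesis .
    qed
    have "2 * real n * L * \<eta> \<le> 1 / 2"
    proof -
      have "2 * real n * L * \<eta> \<le> 2 * real n * L * (1 / (4 * real n * L + 4))"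
        using eta Lnn by (intro mult_left_mono) auto
      also have "\<dots> \<le> 1 / 2"
      proof -
        have "1 / 2 - 2 * real n * L * (1 / (4 * real n * L + 4)) = 2 / (4 * real n * L + 4)"
          using pos4 by (simp add: field_simps)
        moreover have "2 / (4 * real n * L + 4) > 0" using pos4 by simp
        ultimately show ?thesis by linarith
      qed
      finally show ?thesis .
    qed
    then have "(2 * real n * L * \<eta>) * M \<le> (1 / 2) * M"
      using M0 by (rule mult_right_mono)
    then have "2 * real n * L * M * \<eta> \<le> M / 2" by (simp add: algebra_simps)
    then have "M \<le> M / 2" using Dle[OF ts(1)] unfolding M_def by linarith
    then have M00: "M = 0" using M0 by linarith
    have "ball x1 \<eta> \<subseteq> A"
    proof
      fix t assume "t \<in> ball x1 \<eta>"
      then have t: "t \<in> K" unfolding K_def by auto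
      have "D t \<le> M" using ts t unfolding M_def by auto
      then have "D t = 0" using M00 dst_nonneg[of n "S1 t" "S2 t"] unfolding D_def by linarith
      then show "t \<in> A" unfolding A_def using t KOm by auto
    qed
    then show "\<exists>e>0. \<forall>y. dist y x1 < e \<longrightarrow> y \<in> A"
      using eta(1) by (auto simp: dist_commute subset_iff)
  qed
  have "A \<subseteq> Om" unfolding A_def by auto
  then have "openin (top_of_set Om) A" using openA open_subset by blast
  then have "A = {} \<or> A = Om" using closedA connected_clopen[THEN iffD1, OF Om(2), rule_format, of A] by simp
  then have "A = Om" using x0A by auto
  show ?thesis
  proof (intro ballI)
    fix j x assume j: "j \<in> {1..n}" and x: "x \<in> Om"
    then have "x \<in> A" using \<open>A = Om\<close> by simp
    then have "D x = 0" unfolding A_def by simp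
    then show "z j x = z' j x \<and> w j x = w' j x" using D0 j by blast
  qed
qed



lemma vd_quot:
  fixes f :: "real \<Rightarrow> complex"
  assumes "(f has_vector_derivative D) (at x)"
  shows "isCont (\<lambda>t. if t = x then D else (f t - f x) / of_real (t - x)) x"
proof -
  define q where "q = (\<lambda>t. if t = x then D else (f t - f x) / of_real (t - x))"
  have 1: "((\<lambda>y. norm ((f y - f x) - (y - x) *\<^sub>R D) / norm (y - x)) \<longlongrightarrow> 0) (at x)"
    using assms unfolding has_vector_derivative_def has_derivative_iff_norm by blast
  have 2: "\<forall>\<^sub>F y in at x. norm ((f y - f x) - (y - x) *\<^sub>R D) / norm (y - x) = norm (q y - D)"
    unfolding eventually_at
  proof (intro exI[of _ 1] conjI ballI impI)
    fix y assume "y \<in> UNIV" "y \<noteq> x \<and> dist y x < 1"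
    then have yx: "y \<noteq> x" by auto
    then have nz: "(of_real (y - x) :: complex) \<noteq> 0" by simp
    have "q y - D = ((f y - f x) - of_real (y - x) * D) / of_real (y - x)"
      unfolding q_def using yx nz by (simp add: field_simps)
    then have "norm (q y - D) = norm ((f y - f x) - of_real (y - x) * D) / norm (of_real (y - x) :: complex)"
      by (simp add: norm_divide del: of_real_diff)
    then have "norm (q y - D) = norm ((f y - f x) - of_real (y - x) * D) / norm (y - x)"
      by (simp only: norm_of_real real_norm_def)
    then show "norm ((f y - f x) - (y - x) *\<^sub>R D) / norm (y - x) = norm (q y - D)"
      by (simp add: scaleR_conv_of_real)
  qed simp
  have "((\<lambda>y. norm (q y - D)) \<longlongrightarrow> 0) (at x)" by (rule Lim_transform_eventually[OF 1 2])
  then have "(q \<longlongrightarrow> D) (at x)" by (simp add: tendsto_norm_zero_iff LIM_zero_iff)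
  then show ?thesis unfolding q_def continuous_at by simp
qed

lemma quot_eq: "f t - f x = of_real (t - x) * (if t = x then D else (f t - f x) / of_real (t - x))"
  for f :: "real \<Rightarrow> complex"
  by (cases "t = x") auto

lemma vd_carat:
  fixes f \<psi> :: "real \<Rightarrow> complex"
  assumes "open U" "x \<in> U" "\<forall>t\<in>U. f t - f x = of_real (t - x) * \<psi> t" "isCont \<psi> x"
  shows "(f has_vector_derivative \<psi> x) (at x)"
  unfolding has_vector_derivative_def has_derivative_iff_norm
proof (intro conjI)
  show "bounded_linear (\<lambda>h. h *\<^sub>R \<psi> x)" by (rule bounded_linear_scaleR_left)
  have "((\<lambda>y. \<psi> y - \<psi> x) \<longlongrightarrow> 0) (at x)"
    using assms(4) unfolding continuous_at by (simp add: LIM_zero_iff)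
  then have 1: "((\<lambda>y. norm (\<psi> y - \<psi> x)) \<longlongrightarrow> 0) (at x)" by (simp add: tendsto_norm_zero_iff)
  have 2: "\<forall>\<^sub>F y in at x. norm (\<psi> y - \<psi> x) = norm ((f y - f x) - (y - x) *\<^sub>R \<psi> x) / norm (y - x)"
    using eventually_at_in_open[OF assms(1,2)]
  proof (rule eventually_mono)
    fix y assume "y \<in> U - {x}"
    then have y: "y \<in> U" "y \<noteq> x" by auto
    have "(f y - f x) - (y - x) *\<^sub>R \<psi> x = of_real (y - x) * (\<psi> y - \<psi> x)"
      using assms(3) y by (simp add: scaleR_conv_of_real algebra_simps)
    then have "norm ((f y - f x) - (y - x) *\<^sub>R \<psi> x) = norm (of_real (y - x) :: complex) * norm (\<psi> y - \<psi> x)"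
      by (simp add: norm_mult del: of_real_diff)
    then have "norm ((f y - f x) - (y - x) *\<^sub>R \<psi> x) = \<bar>y - x\<bar> * norm (\<psi> y - \<psi> x)"
      by (simp only: norm_of_real)
    then show "norm (\<psi> y - \<psi> x) = norm ((f y - f x) - (y - x) *\<^sub>R \<psi> x) / norm (y - x)"
      using y by simp
  qed
  show "((\<lambda>y. norm ((f y - f x) - (y - x) *\<^sub>R \<psi> x) / norm (y - x)) \<longlongrightarrow> 0) (at x)"
    by (rule Lim_transform_eventually[OF 1 2])
qed

lemma polyz_deriv:
  "((\<lambda>z. \<Sum>j\<in>I. c j * z ^ j) has_field_derivative (\<Sum>j\<in>I. c j * (of_nat j * z ^ (j - 1)))) (at z)"
  for c :: "nat \<Rightarrow> complex"
  by (auto intro!: derivative_eq_intros simp: algebra_simps)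

lemma poly_chain:
  fixes c c' :: "nat \<Rightarrow> _" and \<zeta> :: "real \<Rightarrow> complex"
  assumes "\<forall>j\<in>I. (c j has_vector_derivative c' j) (at x)" "(\<zeta> has_vector_derivative d) (at x)"
  shows "((\<lambda>t. \<Sum>j\<in>I. c j t * \<zeta> t ^ j) has_vector_derivative
          (\<Sum>j\<in>I. c' j * \<zeta> x ^ j) + d * (\<Sum>j\<in>I. c j x * (of_nat j * \<zeta> x ^ (j - 1)))) (at x)"
proof -
  have pw: "((\<lambda>t. \<zeta> t ^ j) has_vector_derivative (d * (of_nat j * \<zeta> x ^ (j - 1)))) (at x)" for j
  proof -
    have "((\<lambda>z. z ^ j) has_field_derivative (of_nat j * \<zeta> x ^ (j - 1))) (at (\<zeta> x))"
      by (rule DERIV_cong[OF DERIV_power[OF DERIV_ident]]) simp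
    from field_vector_diff_chain_at[OF assms(2) this] show ?thesis by (simp add: comp_def)
  qed
  have "((\<lambda>t. \<Sum>j\<in>I. c j t * \<zeta> t ^ j) has_vector_derivative
          (\<Sum>j\<in>I. c j x * (d * (of_nat j * \<zeta> x ^ (j - 1))) + c' j * \<zeta> x ^ j)) (at x)"
    by (rule has_vector_derivative_sum) (use assms(1) pw in \<open>auto intro!: has_vector_derivative_mult\<close>)
  then show ?thesis
    by (simp add: sum.distrib sum_distrib_left algebra_simps)
qed



lemma alg_final:
  fixes a G Gz Ov Q d \<sigma> :: complex
  assumes "Q \<noteq> 0" "\<sigma> * \<sigma> = 1" "d = -2 * \<i> * (\<sigma> * a * G) / Q"
  shows "\<sigma> * (d * G + a * ((- (\<i> * \<sigma> * Ov)) + d * Gz)) =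
         - \<i> * (2 * a * G * G + 2 * a * a * G * Gz + a * Q * Ov) / Q"
proof -
  have "\<sigma> * (d * G + a * ((- (\<i> * \<sigma> * Ov)) + d * Gz)) =
        \<sigma> * d * (G + a * Gz) - \<i> * (\<sigma> * \<sigma>) * a * Ov" by (simp add: algebra_simps)
  also have "\<dots> = \<sigma> * d * (G + a * Gz) - \<i> * a * Ov" using assms(2) by simp
  also have "\<sigma> * d = -2 * \<i> * (\<sigma> * \<sigma>) * a * G / Q" using assms(3) by (simp add: algebra_simps)
  also have "\<dots> = -2 * \<i> * a * G / Q" using assms(2) by simp
  finally show ?thesis using assms(1) by (simp add: field_simps)
qed

lemma root_family:
  fixes p hc g \<zeta> :: "nat \<Rightarrow> real \<Rightarrow> complex" and c :: "real \<Rightarrow> complex" and \<sigma> :: complex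
  assumes pdiff: "\<forall>k\<le>n. \<forall>x. p k differentiable (at x)"
    and gdiff: "\<forall>k<n. \<forall>x. g k differentiable (at x)"
    and P_eq: "\<forall>z x. ((\<lambda>t. Fpoly n p z t) has_vector_derivative
                 (c x * Fpoly n p z x + 2 * \<i> * \<sigma> * z * Gpoly n g z x)) (at x)"
    and G_eq: "\<forall>z x. ((\<lambda>t. Gpoly n g z t) has_vector_derivative
                 (\<i> * \<sigma> * (Fpoly n p z x - Fpoly n hc z x))) (at x)"
    and R_eq: "\<forall>z x. z\<^sup>2 * (Gpoly n g z x)\<^sup>2 + z * Fpoly n p z x * Fpoly n hc z x = Rfun n E z"
    and sig: "\<sigma> * \<sigma> = 1"
    and Om: "open Om"
    and fac: "\<forall>x\<in>Om. \<forall>z. Fpoly n p z x = (\<Prod>j\<in>{1..n}. z - \<zeta> j x)"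
    and cont: "\<forall>j\<in>{1..n}. continuous_on Om (\<zeta> j)"
    and dist: "\<forall>x\<in>Om. \<forall>j\<in>{1..n}. \<forall>l\<in>{1..n}. j \<noteq> l \<longrightarrow> \<zeta> j x \<noteq> \<zeta> l x"
    and j: "j \<in> {1..n}" and x: "x \<in> Om"
  shows "(\<zeta> j has_vector_derivative (-2 * \<i> * (\<sigma> * \<zeta> j x * Gpoly n g (\<zeta> j x) x) /
              (\<Prod>l\<in>{1..n} - {j}. \<zeta> j x - \<zeta> l x))) (at x)
       \<and> ((\<lambda>t. \<sigma> * \<zeta> j t * Gpoly n g (\<zeta> j t) t) has_vector_derivative
              (- \<i> * deriv (Rfun n E) (\<zeta> j x) / (\<Prod>l\<in>{1..n} - {j}. \<zeta> j x - \<zeta> l x))) (at x)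
       \<and> (\<sigma> * \<zeta> j x * Gpoly n g (\<zeta> j x) x)\<^sup>2 = Rfun n E (\<zeta> j x)"
proof -
  define a where "a = \<zeta> j x"
  define Q where "Q = (\<lambda>z. \<Prod>l\<in>{1..n} - {j}. z - \<zeta> l x)"
  define P where "P = (\<lambda>z t. Fpoly n p z t)"
  define Ov where "Ov = (\<lambda>z t. Fpoly n hc z t)"
  define G where "G = (\<lambda>z t. Gpoly n g z t)"
  have Psum: "P z t = (\<Sum>i\<le>n. p (n - i) t * z ^ i)" for z t unfolding P_def Fpoly_def ..
  have Osum: "Ov z t = (\<Sum>i\<le>n. hc (n - i) t * z ^ i)" for z t unfolding Ov_def Fpoly_def ..
  have Gsum: "G z t = (\<Sum>i<n. g (n - 1 - i) t * z ^ i)" for z t unfolding G_def Gpoly_def ..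
  have Pfac: "P z x = (z - a) * Q z" for z
    using fac x prod.remove[of "{1..n}" j "\<lambda>j. z - \<zeta> j x"] j unfolding P_def Q_def a_def by simp
  have Qa: "Q a \<noteq> 0"
    unfolding Q_def a_def using dist x j by (simp add: prod_zero_iff)
  have Pa: "P a x = 0" using Pfac by simp
  have Proot: "P (\<zeta> j t) t = 0" if "t \<in> Om" for t
    using fac that j unfolding P_def by (auto simp: prod_zero_iff)
  define p' where "p' = (\<lambda>k. vector_derivative (p k) (at x))"
  define g' where "g' = (\<lambda>k. vector_derivative (g k) (at x))"
  have hp: "(p k has_vector_derivative p' k) (at x)" if "k \<le> n" for k
    using pdiff that unfolding p'_def by (simp add: vector_derivative_works[symmetric])
  have hg: "(g k has_vector_derivative g' k) (at x)" if "k < n" for k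
    using gdiff that unfolding g'_def by (simp add: vector_derivative_works[symmetric])
  have Px_eq: "(\<Sum>i\<le>n. p' (n - i) * z ^ i) = c x * P z x + 2 * \<i> * \<sigma> * z * G z x" for z
  proof -
    have "((\<lambda>t. \<Sum>i\<le>n. p (n - i) t * (\<lambda>_. z) t ^ i) has_vector_derivative
          (\<Sum>i\<le>n. p' (n - i) * (\<lambda>_. z) x ^ i) + 0 * (\<Sum>i\<le>n. p (n - i) x * (of_nat i * (\<lambda>_. z) x ^ (i - 1)))) (at x)"
      by (rule poly_chain) (auto intro: hp has_vector_derivative_const)
    then have "((\<lambda>t. P z t) has_vector_derivative (\<Sum>i\<le>n. p' (n - i) * z ^ i)) (at x)"
      by (simp add: Psum)
    moreover have "((\<lambda>t. P z t) has_vector_derivative (c x * P z x + 2 * \<i> * \<sigma> * z * G z x)) (at x)"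
      using P_eq unfolding P_def G_def by blast
    ultimately show ?thesis by (rule vector_derivative_unique_at)
  qed
  have Gx_eq: "(\<Sum>i<n. g' (n - 1 - i) * z ^ i) = \<i> * \<sigma> * (P z x - Ov z x)" for z
  proof -
    have "((\<lambda>t. \<Sum>i<n. g (n - 1 - i) t * (\<lambda>_. z) t ^ i) has_vector_derivative
          (\<Sum>i<n. g' (n - 1 - i) * (\<lambda>_. z) x ^ i) + 0 * (\<Sum>i<n. g (n - 1 - i) x * (of_nat i * (\<lambda>_. z) x ^ (i - 1)))) (at x)"
      by (rule poly_chain) (auto intro: hg has_vector_derivative_const)
    then have "((\<lambda>t. G z t) has_vector_derivative (\<Sum>i<n. g' (n - 1 - i) * z ^ i)) (at x)"
      by (simp add: Gsum)
    moreover have "((\<lambda>t. G z t) has_vector_derivative (\<i> * \<sigma> * (P z x - Ov z x))) (at x)"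
      using G_eq unfolding P_def G_def Ov_def by blast
    ultimately show ?thesis by (rule vector_derivative_unique_at)
  qed
  define \<psi>p where "\<psi>p = (\<lambda>i t. if t = x then p' (n - i) else (p (n - i) t - p (n - i) x) / of_real (t - x))"
  have \<psi>p_cont: "isCont (\<psi>p i) x" if "i \<le> n" for i
    unfolding \<psi>p_def by (rule vd_quot[OF hp]) simp
  have \<psi>p_eq: "p (n - i) t - p (n - i) x = of_real (t - x) * \<psi>p i t" for i t
    unfolding \<psi>p_def by (rule quot_eq)
  define W where "W = (\<lambda>t. \<Sum>i\<le>n. \<psi>p i t * \<zeta> j t ^ i)"
  have PW: "P z t - P z x = of_real (t - x) * (\<Sum>i\<le>n. \<psi>p i t * z ^ i)" for z t
  proof -
    have "P z t - P z x = (\<Sum>i\<le>n. (p (n - i) t - p (n - i) x) * z ^ i)"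
      unfolding Psum by (simp add: sum_subtractf algebra_simps)
    also have "\<dots> = (\<Sum>i\<le>n. of_real (t - x) * (\<psi>p i t * z ^ i))"
      by (simp add: \<psi>p_eq mult.assoc del: of_real_diff)
    also have "\<dots> = of_real (t - x) * (\<Sum>i\<le>n. \<psi>p i t * z ^ i)"
      by (simp add: sum_distrib_left del: of_real_diff)
    finally show ?thesis .
  qed
  have contj: "continuous_on Om (\<zeta> j)" using cont j by blast
  have isContj: "isCont (\<zeta> j) x" using contj Om x continuous_on_eq_continuous_at by blast
  have contQ: "continuous_on Om (\<lambda>t. Q (\<zeta> j t))"
    unfolding Q_def by (intro continuous_intros contj)
  define U where "U = Om \<inter> (\<lambda>t. Q (\<zeta> j t)) -` (- {0})"
  have Uopen: "open U" unfolding U_def by (rule continuous_open_preimage[OF contQ Om]) (intro open_Compl closed_singleton)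
  have xU: "x \<in> U" unfolding U_def using x Qa a_def by simp
  define \<psi> where "\<psi> = (\<lambda>t. - W t / Q (\<zeta> j t))"
  have \<psi>eq: "\<forall>t\<in>U. \<zeta> j t - \<zeta> j x = of_real (t - x) * \<psi> t"
  proof
    fix t assume t: "t \<in> U"
    then have tO: "t \<in> Om" and Qt: "Q (\<zeta> j t) \<noteq> 0" unfolding U_def by auto
    have "0 = P (\<zeta> j t) t" using Proot[OF tO] by simp
    also have "\<dots> = P (\<zeta> j t) x + of_real (t - x) * W t"
      using PW[of "\<zeta> j t" t] unfolding W_def by (simp add: algebra_simps)
    also have "\<dots> = (\<zeta> j t - \<zeta> j x) * Q (\<zeta> j t) + of_real (t - x) * W t"
      using Pfac a_def by simp
    finally have "(\<zeta> j t - \<zeta> j x) * Q (\<zeta> j t) = - (of_real (t - x) * W t)"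
      by (simp add: eq_neg_iff_add_eq_0)
    then show "\<zeta> j t - \<zeta> j x = of_real (t - x) * \<psi> t"
      unfolding \<psi>_def using Qt by (simp add: field_simps)
  qed
  have \<psi>cont: "isCont \<psi> x"
  proof -
    have "isCont W x" unfolding W_def
      by (intro isCont_sum ballI continuous_intros isContj) (use \<psi>p_cont in auto)
    moreover have "isCont (\<lambda>t. Q (\<zeta> j t)) x" unfolding Q_def
      by (intro continuous_intros isContj)
    ultimately show ?thesis unfolding \<psi>_def using Qa a_def
      by (intro continuous_intros) auto
  qed
  have Wx: "W x = 2 * \<i> * \<sigma> * a * G a x"
  proof -
    have "W x = (\<Sum>i\<le>n. p' (n - i) * a ^ i)" unfolding W_def \<psi>p_def a_def by simp
    also have "\<dots> = 2 * \<i> * \<sigma> * a * G a x" using Px_eq[of a] Pa by simp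
    finally show ?thesis .
  qed
  define d where "d = -2 * \<i> * (\<sigma> * a * G a x) / Q a"
  have \<psi>x: "\<psi> x = d" unfolding \<psi>_def d_def Wx using a_def by (simp add: algebra_simps)
  have dz: "(\<zeta> j has_vector_derivative d) (at x)"
    using vd_carat[OF Uopen xU \<psi>eq \<psi>cont] \<psi>x by simp
  define Gz where "Gz = (\<Sum>i<n. g (n - 1 - i) x * (of_nat i * a ^ (i - 1)))"
  have dG: "((\<lambda>t. G (\<zeta> j t) t) has_vector_derivative (- (\<i> * \<sigma> * Ov a x)) + d * Gz) (at x)"
  proof -
    have "((\<lambda>t. \<Sum>i<n. g (n - 1 - i) t * \<zeta> j t ^ i) has_vector_derivative
          (\<Sum>i<n. g' (n - 1 - i) * \<zeta> j x ^ i) + d * (\<Sum>i<n. g (n - 1 - i) x * (of_nat i * \<zeta> j x ^ (i - 1)))) (at x)"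
      by (rule poly_chain) (auto intro: hg dz)
    moreover have "(\<Sum>i<n. g' (n - 1 - i) * a ^ i) = - (\<i> * \<sigma> * Ov a x)"
      using Gx_eq[of a] Pa by simp
    ultimately show ?thesis unfolding Gsum Gz_def a_def by simp
  qed
  have dw: "((\<lambda>t. \<sigma> * \<zeta> j t * G (\<zeta> j t) t) has_vector_derivative
            \<sigma> * (d * G a x + a * ((- (\<i> * \<sigma> * Ov a x)) + d * Gz))) (at x)"
  proof -
    have "((\<lambda>t. \<sigma> * (\<zeta> j t * G (\<zeta> j t) t)) has_vector_derivative
            \<sigma> * (\<zeta> j x * ((- (\<i> * \<sigma> * Ov a x)) + d * Gz) + d * G (\<zeta> j x) x)) (at x)"
      by (intro has_vector_derivative_mult_right has_vector_derivative_mult dz dG)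
    then show ?thesis unfolding a_def by (simp add: algebra_simps)
  qed
  define Pz where "Pz = (\<Sum>i\<le>n. p (n - i) x * (of_nat i * a ^ (i - 1)))"
  define Oz where "Oz = (\<Sum>i\<le>n. hc (n - i) x * (of_nat i * a ^ (i - 1)))"
  have hGz: "((\<lambda>z. G z x) has_field_derivative Gz) (at a)"
    unfolding Gsum Gz_def by (rule polyz_deriv)
  have hOz: "((\<lambda>z. Ov z x) has_field_derivative Oz) (at a)"
    unfolding Osum Oz_def by (rule polyz_deriv)
  have hPz: "((\<lambda>z. P z x) has_field_derivative Q a) (at a)"
  proof -
    have "Q holomorphic_on UNIV" unfolding Q_def by (intro holomorphic_intros)
    then have "(Q has_field_derivative deriv Q a) (at a)"
      using holomorphic_derivI[of Q UNIV a UNIV] by simp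
    note dQ = this
    have "((\<lambda>z. z - a) has_field_derivative 1) (at a)" by (auto intro!: derivative_eq_intros)
    from DERIV_mult[OF this dQ]
    have "((\<lambda>z. (z - a) * Q z) has_field_derivative 1 * Q a + deriv Q a * (a - a)) (at a)" by simp
    then show ?thesis unfolding Pfac by simp
  qed
  have Rfun_eq: "Rfun n E = (\<lambda>z. z\<^sup>2 * (G z x)\<^sup>2 + z * P z x * Ov z x)"
    using R_eq unfolding G_def P_def Ov_def by (auto intro!: ext simp: R_eq[rule_format, symmetric])
  have "((\<lambda>z. z\<^sup>2 * (G z x)\<^sup>2 + z * P z x * Ov z x) has_field_derivative
         (2 * a * G a x * G a x + 2 * a * a * G a x * Gz + a * Q a * Ov a x)) (at a)"
  proof -
    have hz: "((\<lambda>z. z) has_field_derivative 1) (at a)" by (rule DERIV_ident)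
    have h1: "((\<lambda>z. z * z) has_field_derivative 1 * a + 1 * a) (at a)" using DERIV_mult[OF hz hz] .
    have h2: "((\<lambda>z. G z x * G z x) has_field_derivative Gz * G a x + Gz * G a x) (at a)"
      using DERIV_mult[OF hGz hGz] .
    have h3: "((\<lambda>z. z * z * (G z x * G z x)) has_field_derivative
        (1 * a + 1 * a) * (G a x * G a x) + (Gz * G a x + Gz * G a x) * (a * a)) (at a)"
      using DERIV_mult[OF h1 h2] .
    have h4: "((\<lambda>z. z * P z x) has_field_derivative 1 * P a x + Q a * a) (at a)"
      using DERIV_mult[OF hz hPz] .
    have h5: "((\<lambda>z. z * P z x * Ov z x) has_field_derivative
        (1 * P a x + Q a * a) * Ov a x + Oz * (a * P a x)) (at a)"
      using DERIV_mult[OF h4 hOz] .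
    have "((\<lambda>z. z * z * (G z x * G z x) + z * P z x * Ov z x) has_field_derivative
        ((1 * a + 1 * a) * (G a x * G a x) + (Gz * G a x + Gz * G a x) * (a * a))
        + ((1 * P a x + Q a * a) * Ov a x + Oz * (a * P a x))) (at a)"
      using DERIV_add[OF h3 h5] .
    then show ?thesis using Pa by (simp add: power2_eq_square algebra_simps)
  qed
  then have Rder: "deriv (Rfun n E) a = 2 * a * G a x * G a x + 2 * a * a * G a x * Gz + a * Q a * Ov a x"
    unfolding Rfun_eq by (rule DERIV_imp_deriv)
  have w': "\<sigma> * (d * G a x + a * ((- (\<i> * \<sigma> * Ov a x)) + d * Gz)) = - \<i> * deriv (Rfun n E) a / Q a"
    unfolding Rder by (rule alg_final[OF Qa sig d_def])
  have curve: "(\<sigma> * a * G a x)\<^sup>2 = Rfun n E a"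
  proof -
    have "(\<sigma> * a * G a x)\<^sup>2 = (\<sigma> * \<sigma>) * (a\<^sup>2 * (G a x)\<^sup>2)" by (simp add: power2_eq_square algebra_simps)
    also have "\<dots> = a\<^sup>2 * (G a x)\<^sup>2 + a * P a x * Ov a x" using sig Pa by simp
    also have "\<dots> = Rfun n E a" unfolding Rfun_eq by simp
    finally show ?thesis .
  qed
  show ?thesis
    using dz dw w' curve unfolding d_def a_def Q_def G_def by simp
qed



lemma Rfun_holo: "Rfun n E holomorphic_on UNIV"
proof -
  have "(\<lambda>z. \<Prod>m\<le>2*n. z - E m) holomorphic_on UNIV" by (intro holomorphic_intros)
  then show ?thesis unfolding Rfun_def[abs_def] .
qed

lemma dRfun_holo: "deriv (Rfun n E) holomorphic_on UNIV"
  by (rule holomorphic_deriv[OF Rfun_holo open_UNIV])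

lemma ode_smooth:
  fixes z w :: "nat \<Rightarrow> real \<Rightarrow> complex"
  assumes Om: "open Om"
    and ode: "\<forall>j\<in>{1..n}. \<forall>x\<in>Om.
        (z j has_vector_derivative (-2 * \<i> * w j x / (\<Prod>l\<in>{1..n} - {j}. z j x - z l x))) (at x) \<and>
        (w j has_vector_derivative (- \<i> * deriv (Rfun n E) (z j x) / (\<Prod>l\<in>{1..n} - {j}. z j x - z l x))) (at x)"
    and dist: "\<forall>x\<in>Om. \<forall>j\<in>{1..n}. \<forall>l\<in>{1..n}. j \<noteq> l \<longrightarrow> z j x \<noteq> z l x"
  shows "\<forall>j\<in>{1..n}. smooth_on Om (z j) \<and> smooth_on Om (w j)"
proof -
  have nz: "\<forall>x\<in>Om. (\<Prod>l\<in>{1..n} - {j}. z j x - z l x) \<noteq> 0" if "j \<in> {1..n}" for j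
    using dist that by (simp add: prod_zero_iff)
  have "\<forall>j\<in>{1..n}. Ck Om k (z j) \<and> Ck Om k (w j)" for k
  proof (induction k)
    case 0
    show ?case unfolding Ck_0 using ode differentiableI_vector by blast
  next
    case (Suc k)
    show ?case
    proof
      fix j assume j: "j \<in> {1..n}"
      have den: "Ck Om k (\<lambda>x. \<Prod>l\<in>{1..n} - {j}. z j x - z l x)"
        by (rule Ck_prod[OF Om]) (use Suc.IH j in \<open>auto intro!: Ck_diff_fun[OF Om]\<close>)
      have cz: "Ck Om k (\<lambda>x. -2 * \<i> * w j x / (\<Prod>l\<in>{1..n} - {j}. z j x - z l x))"
        by (rule Ck_divide[OF Om nz[OF j] Ck_mult[OF Om Ck_const] den]) (use Suc.IH j in auto)
      have cw: "Ck Om k (\<lambda>x. - \<i> * deriv (Rfun n E) (z j x) / (\<Prod>l\<in>{1..n} - {j}. z j x - z l x))"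
        by (rule Ck_divide[OF Om nz[OF j] Ck_mult[OF Om Ck_const Ck_comp[OF Om open_UNIV dRfun_holo]] den])
           (use Suc.IH j in auto)
      have "Ck Om (Suc k) (z j)" by (rule Ck_deriv[OF Om _ cz]) (use ode j in blast)
      moreover have "Ck Om (Suc k) (w j)" by (rule Ck_deriv[OF Om _ cw]) (use ode j in blast)
      ultimately show "Ck Om (Suc k) (z j) \<and> Ck Om (Suc k) (w j)" ..
    qed
  qed
  then show ?thesis unfolding smooth_on_Ck by blast
qed

definition PhiZ :: "nat \<Rightarrow> nat \<Rightarrow> st \<Rightarrow> complex" where
  "PhiZ n j S = -2 * \<i> * snd S j / (\<Prod>l\<in>{1..n} - {j}. fst S j - fst S l)"

definition PhiW :: "nat \<Rightarrow> (nat \<Rightarrow> complex) \<Rightarrow> nat \<Rightarrow> st \<Rightarrow> complex" where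
  "PhiW n E j S = - \<i> * deriv (Rfun n E) (fst S j) / (\<Prod>l\<in>{1..n} - {j}. fst S j - fst S l)"

lemma Lip_Phi:
  assumes "j \<in> {1..n}" "\<forall>j\<in>{1..n}. \<forall>l\<in>{1..n}. j \<noteq> l \<longrightarrow> fst S0 j \<noteq> fst S0 l"
  shows "LipAt n (PhiZ n j) S0" "LipAt n (PhiW n E j) S0"
proof -
  have den: "LipAt n (\<lambda>S. \<Prod>l\<in>{1..n} - {j}. fst S j - fst S l) S0"
    by (rule Lip_prod) (use assms(1) in \<open>auto intro!: Lip_diff Lip_fst\<close>)
  have nz: "(\<Prod>l\<in>{1..n} - {j}. fst S0 j - fst S0 l) \<noteq> 0"
    using assms by (simp add: prod_zero_iff)
  show "LipAt n (PhiZ n j) S0" unfolding PhiZ_def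
    by (rule Lip_divide[OF Lip_mult[OF Lip_const Lip_snd[OF assms(1)]] den nz])
  show "LipAt n (PhiW n E j) S0" unfolding PhiW_def
    by (rule Lip_divide[OF Lip_mult[OF Lip_const Lip_comp[OF Lip_fst[OF assms(1)] dRfun_holo]] den nz])
qed

lemma sol_unique:
  assumes Om: "open Om" "is_interval Om" "x0 \<in> Om"
    and s1: "dubrovin_sol n E Om z w" and s2: "dubrovin_sol n E Om z' w'"
    and init: "\<forall>j\<in>{1..n}. z' j x0 = z j x0 \<and> w' j x0 = w j x0"
  shows "\<forall>j\<in>{1..n}. \<forall>x\<in>Om. z' j x = z j x \<and> w' j x = w j x"
proof -
  have "\<forall>j\<in>{1..n}. \<forall>x\<in>Om. z j x = z' j x \<and> w j x = w' j x"
  proof (rule ode_unique[where \<Phi>z = "PhiZ n" and \<Phi>w = "PhiW n E" and Om = Om, OF _ _ Om(3)])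
    show "open Om" "connected Om" using Om is_interval_connected by auto
    show "\<forall>x\<in>Om. \<forall>j\<in>{1..n}. LipAt n (PhiZ n j) (\<lambda>j. z j x, \<lambda>j. w j x) \<and>
                               LipAt n (PhiW n E j) (\<lambda>j. z j x, \<lambda>j. w j x)"
      using s1 Lip_Phi unfolding dubrovin_sol_def by simp
    show "\<forall>j\<in>{1..n}. \<forall>x\<in>Om. (z j has_vector_derivative PhiZ n j (\<lambda>j. z j x, \<lambda>j. w j x)) (at x) \<and>
                               (w j has_vector_derivative PhiW n E j (\<lambda>j. z j x, \<lambda>j. w j x)) (at x)"
      using s1 unfolding dubrovin_sol_def PhiZ_def PhiW_def by simp
    show "\<forall>j\<in>{1..n}. \<forall>x\<in>Om. (z' j has_vector_derivative PhiZ n j (\<lambda>j. z' j x, \<lambda>j. w' j x)) (at x) \<and>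
                               (w' j has_vector_derivative PhiW n E j (\<lambda>j. z' j x, \<lambda>j. w' j x)) (at x)"
      using s2 unfolding dubrovin_sol_def PhiZ_def PhiW_def by simp
    show "\<forall>j\<in>{1..n}. z j x0 = z' j x0 \<and> w j x0 = w' j x0" using init by simp
  qed
  then show ?thesis by simp
qed

lemma family_result:
  fixes p hc g \<zeta> :: "nat \<Rightarrow> real \<Rightarrow> complex" and c :: "real \<Rightarrow> complex" and \<sigma> :: complex
  assumes pdiff: "\<forall>k\<le>n. \<forall>x. p k differentiable (at x)"
    and gdiff: "\<forall>k<n. \<forall>x. g k differentiable (at x)"
    and P_eq: "\<forall>z x. ((\<lambda>t. Fpoly n p z t) has_vector_derivative
                 (c x * Fpoly n p z x + 2 * \<i> * \<sigma> * z * Gpoly n g z x)) (at x)"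
    and G_eq: "\<forall>z x. ((\<lambda>t. Gpoly n g z t) has_vector_derivative
                 (\<i> * \<sigma> * (Fpoly n p z x - Fpoly n hc z x))) (at x)"
    and R_eq: "\<forall>z x. z\<^sup>2 * (Gpoly n g z x)\<^sup>2 + z * Fpoly n p z x * Fpoly n hc z x = Rfun n E z"
    and sig: "\<sigma> * \<sigma> = 1"
    and Om: "open Om" "is_interval Om"
    and fac: "\<forall>x\<in>Om. \<forall>z. Fpoly n p z x = (\<Prod>j\<in>{1..n}. z - \<zeta> j x)"
    and cont: "\<forall>j\<in>{1..n}. continuous_on Om (\<zeta> j)"
    and dist: "\<forall>x\<in>Om. \<forall>j\<in>{1..n}. \<forall>l\<in>{1..n}. j \<noteq> l \<longrightarrow> \<zeta> j x \<noteq> \<zeta> l x"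
  shows "dubrovin_result n E Om \<zeta> (\<lambda>j x. \<sigma> * \<zeta> j x * Gpoly n g (\<zeta> j x) x)"
proof -
  define w where "w = (\<lambda>j x. \<sigma> * \<zeta> j x * Gpoly n g (\<zeta> j x) x)"
  have rf: "(\<zeta> j has_vector_derivative (-2 * \<i> * w j x / (\<Prod>l\<in>{1..n} - {j}. \<zeta> j x - \<zeta> l x))) (at x)
       \<and> (w j has_vector_derivative
              (- \<i> * deriv (Rfun n E) (\<zeta> j x) / (\<Prod>l\<in>{1..n} - {j}. \<zeta> j x - \<zeta> l x))) (at x)
       \<and> (w j x)\<^sup>2 = Rfun n E (\<zeta> j x)" if "j \<in> {1..n}" "x \<in> Om" for j x
    using root_family[OF pdiff gdiff P_eq G_eq R_eq sig Om(1) fac cont dist that] unfolding w_def by simp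
  have ode: "\<forall>j\<in>{1..n}. \<forall>x\<in>Om.
        (\<zeta> j has_vector_derivative (-2 * \<i> * w j x / (\<Prod>l\<in>{1..n} - {j}. \<zeta> j x - \<zeta> l x))) (at x) \<and>
        (w j has_vector_derivative (- \<i> * deriv (Rfun n E) (\<zeta> j x) / (\<Prod>l\<in>{1..n} - {j}. \<zeta> j x - \<zeta> l x))) (at x)"
    using rf by blast
  have sol: "dubrovin_sol n E Om \<zeta> w"
    unfolding dubrovin_sol_def
  proof (intro conjI)
    show "\<forall>j\<in>{1..n}. smooth_on Om (\<zeta> j) \<and> smooth_on Om (w j)"
      by (rule ode_smooth[OF Om(1) ode dist])
    show "\<forall>j\<in>{1..n}. \<forall>x\<in>Om. Aff (\<zeta> j x) (w j x) \<in> Kn n E"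
      using rf unfolding Kn_def by auto
    show "\<forall>x\<in>Om. \<forall>j\<in>{1..n}. \<forall>l\<in>{1..n}. j \<noteq> l \<longrightarrow> \<zeta> j x \<noteq> \<zeta> l x" by (rule dist)
    show "\<forall>j\<in>{1..n}. \<forall>x\<in>Om.
        (\<zeta> j has_vector_derivative (-2 * \<i> * ycoord (Aff (\<zeta> j x) (w j x)) / (\<Prod>l\<in>{1..n} - {j}. \<zeta> j x - \<zeta> l x))) (at x) \<and>
        (w j has_vector_derivative (- \<i> * deriv (Rfun n E) (\<zeta> j x) / (\<Prod>l\<in>{1..n} - {j}. \<zeta> j x - \<zeta> l x))) (at x)"
      using ode by simp
  qed
  have "\<forall>x0\<in>Om. \<forall>z' w'. dubrovin_sol n E Om z' w' \<and> (\<forall>j\<in>{1..n}. z' j x0 = \<zeta> j x0 \<and> w' j x0 = w j x0)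
          \<longrightarrow> (\<forall>j\<in>{1..n}. \<forall>x\<in>Om. z' j x = \<zeta> j x \<and> w' j x = w j x)"
    using sol_unique[OF Om(1) Om(2) _ sol] by blast
  then have "dubrovin_result n E Om \<zeta> w" unfolding dubrovin_result_def using sol by blast
  then show ?thesis unfolding w_def .
qed



theorem lemma3p2:
  fixes n :: nat
    and u :: "real \<Rightarrow> complex"
    and f g h :: "nat \<Rightarrow> real \<Rightarrow> complex"
    and E :: "nat \<Rightarrow> complex"
    and Om :: "real set"
    and mu nu :: "nat \<Rightarrow> real \<Rightarrow> complex"
  assumes u_smooth: "smooth_on UNIV u"
    and f_smooth: "\<forall>k\<le>n. smooth_on UNIV (f k)"
    and g_smooth: "\<forall>k<n. smooth_on UNIV (g k)"
    and h_smooth: "\<forall>k\<le>n. smooth_on UNIV (h k)"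
    and f0: "\<forall>x. f 0 x = 1" and h0: "\<forall>x. h 0 x = 1"
    and F_eq: "\<forall>z x. ((\<lambda>t. Fpoly n f z t) has_vector_derivative
                 (- \<i> * vector_derivative u (at x) * Fpoly n f z x - 2 * \<i> * z * Gpoly n g z x)) (at x)"
    and H_eq: "\<forall>z x. ((\<lambda>t. Fpoly n h z t) has_vector_derivative
                 (\<i> * vector_derivative u (at x) * Fpoly n h z x + 2 * \<i> * z * Gpoly n g z x)) (at x)"
    and G_eq: "\<forall>z x. ((\<lambda>t. Gpoly n g z t) has_vector_derivative
                 (\<i> * (Fpoly n h z x - Fpoly n f z x))) (at x)"
    and R_eq: "\<forall>z x. z\<^sup>2 * (Gpoly n g z x)\<^sup>2 + z * Fpoly n f z x * Fpoly n h z x = Rfun n E z"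
    and E0: "E 0 = 0"
    and E_distinct: "inj_on E {0..2*n}"
    and Om_open: "open Om" and Om_interval: "is_interval Om"
  shows
    "((\<forall>x\<in>Om. \<forall>z. Fpoly n f z x = (\<Prod>j\<in>{1..n}. z - mu j x)) \<and>
      (\<forall>j\<in>{1..n}. continuous_on Om (mu j)) \<and>
      (\<forall>x\<in>Om. \<forall>j\<in>{1..n}. \<forall>l\<in>{1..n}. j \<noteq> l \<longrightarrow> mu j x \<noteq> mu l x)
      \<longrightarrow> dubrovin_result n E Om mu (\<lambda>j x. - mu j x * Gpoly n g (mu j x) x))
     \<and>
     ((\<forall>x\<in>Om. \<forall>z. Fpoly n h z x = (\<Prod>j\<in>{1..n}. z - nu j x)) \<and>
      (\<forall>j\<in>{1..n}. continuous_on Om (nu j)) \<and>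
      (\<forall>x\<in>Om. \<forall>j\<in>{1..n}. \<forall>l\<in>{1..n}. j \<noteq> l \<longrightarrow> nu j x \<noteq> nu l x)
      \<longrightarrow> dubrovin_result n E Om nu (\<lambda>j x. nu j x * Gpoly n g (nu j x) x))"
proof -
  have diffU: "\<forall>x. \<phi> differentiable (at x)" if "smooth_on UNIV \<phi>" for \<phi>
  proof
    fix x
    have "\<forall>x\<in>UNIV. (vderiv ^^ 0) \<phi> differentiable (at x)" using that unfolding smooth_on_def by (rule spec)
    then show "\<phi> differentiable (at x)" by simp
  qed
  have fdiff: "\<forall>k\<le>n. \<forall>x. f k differentiable (at x)"
  proof (rule allI, rule impI)
    fix k assume "k \<le> n"
    then have "smooth_on UNIV (f k)" using f_smooth by simp
    then show "\<forall>x. f k differentiable (at x)" by (rule diffU)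
  qed
  have hdiff: "\<forall>k\<le>n. \<forall>x. h k differentiable (at x)"
  proof (rule allI, rule impI)
    fix k assume "k \<le> n"
    then have "smooth_on UNIV (h k)" using h_smooth by simp
    then show "\<forall>x. h k differentiable (at x)" by (rule diffU)
  qed
  have gdiff: "\<forall>k<n. \<forall>x. g k differentiable (at x)"
  proof (rule allI, rule impI)
    fix k assume "k < n"
    then have "smooth_on UNIV (g k)" using g_smooth by simp
    then show "\<forall>x. g k differentiable (at x)" by (rule diffU)
  qed
  have part1: "dubrovin_result n E Om mu (\<lambda>j x. - mu j x * Gpoly n g (mu j x) x)"
    if fac: "\<forall>x\<in>Om. \<forall>z. Fpoly n f z x = (\<Prod>j\<in>{1..n}. z - mu j x)"
      and cont: "\<forall>j\<in>{1..n}. continuous_on Om (mu j)"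
      and dist: "\<forall>x\<in>Om. \<forall>j\<in>{1..n}. \<forall>l\<in>{1..n}. j \<noteq> l \<longrightarrow> mu j x \<noteq> mu l x"
  proof -
    have P_eq: "\<forall>z x. ((\<lambda>t. Fpoly n f z t) has_vector_derivative
                 ((- \<i> * vector_derivative u (at x)) * Fpoly n f z x + 2 * \<i> * (-1) * z * Gpoly n g z x)) (at x)"
    proof (intro allI)
      fix z x
      have e: "- \<i> * vector_derivative u (at x) * Fpoly n f z x - 2 * \<i> * z * Gpoly n g z x
          = (- \<i> * vector_derivative u (at x)) * Fpoly n f z x + 2 * \<i> * (-1) * z * Gpoly n g z x"
        by (simp add: algebra_simps)
      have d: "((\<lambda>t. Fpoly n f z t) has_vector_derivative
                 (- \<i> * vector_derivative u (at x) * Fpoly n f z x - 2 * \<i> * z * Gpoly n g z x)) (at x)"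
        using F_eq by blast
      show "((\<lambda>t. Fpoly n f z t) has_vector_derivative
                 ((- \<i> * vector_derivative u (at x)) * Fpoly n f z x + 2 * \<i> * (-1) * z * Gpoly n g z x)) (at x)"
        unfolding e[symmetric] by (rule d)
    qed
    have G_eq': "\<forall>z x. ((\<lambda>t. Gpoly n g z t) has_vector_derivative
                 (\<i> * (-1) * (Fpoly n f z x - Fpoly n h z x))) (at x)"
    proof (intro allI)
      fix z x
      have e: "\<i> * (Fpoly n h z x - Fpoly n f z x) = \<i> * (-1) * (Fpoly n f z x - Fpoly n h z x)"
        by (simp add: algebra_simps)
      have d: "((\<lambda>t. Gpoly n g z t) has_vector_derivative (\<i> * (Fpoly n h z x - Fpoly n f z x))) (at x)"
        using G_eq by blast
      show "((\<lambda>t. Gpoly n g z t) has_vector_derivative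
                 (\<i> * (-1) * (Fpoly n f z x - Fpoly n h z x))) (at x)"
        unfolding e[symmetric] by (rule d)
    qed
    have "dubrovin_result n E Om mu (\<lambda>j x. (-1) * mu j x * Gpoly n g (mu j x) x)"
      by (rule family_result[OF fdiff gdiff P_eq G_eq' R_eq _ Om_open Om_interval fac cont dist]) simp
    then show ?thesis by simp
  qed
  have part2: "dubrovin_result n E Om nu (\<lambda>j x. nu j x * Gpoly n g (nu j x) x)"
    if fac: "\<forall>x\<in>Om. \<forall>z. Fpoly n h z x = (\<Prod>j\<in>{1..n}. z - nu j x)"
      and cont: "\<forall>j\<in>{1..n}. continuous_on Om (nu j)"
      and dist: "\<forall>x\<in>Om. \<forall>j\<in>{1..n}. \<forall>l\<in>{1..n}. j \<noteq> l \<longrightarrow> nu j x \<noteq> nu l x"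
  proof -
    have P_eq: "\<forall>z x. ((\<lambda>t. Fpoly n h z t) has_vector_derivative
                 ((\<i> * vector_derivative u (at x)) * Fpoly n h z x + 2 * \<i> * 1 * z * Gpoly n g z x)) (at x)"
    proof (intro allI)
      fix z x
      have e: "(\<i> * vector_derivative u (at x)) * Fpoly n h z x + 2 * \<i> * 1 * z * Gpoly n g z x
           = \<i> * vector_derivative u (at x) * Fpoly n h z x + 2 * \<i> * z * Gpoly n g z x" by simp
      show "((\<lambda>t. Fpoly n h z t) has_vector_derivative
                 ((\<i> * vector_derivative u (at x)) * Fpoly n h z x + 2 * \<i> * 1 * z * Gpoly n g z x)) (at x)"
        unfolding e by (rule H_eq[rule_format])
    qed
    have G_eq': "\<forall>z x. ((\<lambda>t. Gpoly n g z t) has_vector_derivative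
                 (\<i> * 1 * (Fpoly n h z x - Fpoly n f z x))) (at x)"
    proof (intro allI)
      fix z x
      have e: "\<i> * 1 * (Fpoly n h z x - Fpoly n f z x) = \<i> * (Fpoly n h z x - Fpoly n f z x)" by simp
      show "((\<lambda>t. Gpoly n g z t) has_vector_derivative (\<i> * 1 * (Fpoly n h z x - Fpoly n f z x))) (at x)"
        unfolding e by (rule G_eq[rule_format])
    qed
    have R_eq': "\<forall>z x. z\<^sup>2 * (Gpoly n g z x)\<^sup>2 + z * Fpoly n h z x * Fpoly n f z x = Rfun n E z"
    proof (intro allI)
      fix z x
      have e: "z * Fpoly n h z x * Fpoly n f z x = z * Fpoly n f z x * Fpoly n h z x" by (simp only: mult_ac)
      show "z\<^sup>2 * (Gpoly n g z x)\<^sup>2 + z * Fpoly n h z x * Fpoly n f z x = Rfun n E z"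
        unfolding e by (rule R_eq[rule_format])
    qed
    have "dubrovin_result n E Om nu (\<lambda>j x. 1 * nu j x * Gpoly n g (nu j x) x)"
      by (rule family_result[OF hdiff gdiff P_eq G_eq' R_eq' _ Om_open Om_interval fac cont dist]) simp
    then show ?thesis by simp
  qed
  show ?thesis
    apply (intro conjI impI)
     apply (elim conjE, rule part1, assumption+)
    apply (elim conjE, rule part2, assumption+)
    done
qed


end
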